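(* Let $n,m\ge 1$, let $G\in\mathbb{R}^{2n\times 2n}$ be symmetric, let $C\in\mathbb{R}^{2m\times 2n}$, set $A=\Sigma_n(G+C^\top\Sigma_m C/2)$, and let $\mathcal{C}=(\Sigma_n C^\top\Sigma_m, A\Sigma_n C^\top\Sigma_m,\ldots,A^{2n-1}\Sigma_n C^\top\Sigma_m)$ and $\mathcal{O}=(C^\top, A^\top C^\top,\ldots,(A^\top)^{2n-1}C^\top)^\top$. Then the linear quantum system determined by $(G,C)$ has a decoherence-free (DF) subsystem if and only if $$\mathrm{Ker}(\mathcal{O})\cap\mathrm{Ker}(\mathcal{O}\Sigma_n)\neq\{0\}.$$ Moreover, in that case there always exists a real $2n\times 2\ell$ matrix $T_1$ ($\ell\ge1$) with $\mathrm{Range}(T_1)=\mathrm{Ker}(\mathcal{O})\cap\mathrm{Ker}(\mathcal{O}\Sigma_n)$ and $T_1^\top\Sigma_n T_1=\Sigma_\ell$, and $\hat x_{\rm DF}=T_1^\top\hat x$ is a DF mode.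
   Context: For $k\ge1$, $\Sigma_k=\mathrm{diag}\{\Sigma,\ldots,\Sigma\}$ ($2k\times 2k$) with $\Sigma=\begin{pmatrix}0&1\\-1&0\end{pmatrix}$. The linear quantum system determined by $(G,C)$ is $d\hat x=A\hat x\,dt+\Sigma_nC^\top\Sigma_m\,d\hat{\mathcal W}$ with output $d\hat{\mathcal W}^{\rm out}=C\hat x\,dt+d\hat{\mathcal W}$, where $\hat x=(\hat q_1,\hat p_1,\ldots,\hat q_n,\hat p_n)^\top$ satisfies the canonical commutation relation $\hat x\hat x^\top-(\hat x\hat x^\top)^\top=i\Sigma_n$, $\hat{\mathcal W}$ is the vector of input noise quadratures and $\hat{\mathcal W}^{\rm out}$ that of the output. Definition: the system has a DF subsystem if there is a subsystem, with variable $\hat x_{\rm DF}=T^\top\hat x$ for a real matrix $T$ with nonzero columns, that is (i) uncontrollable with respect to $\hat{\mathcal W}$ and unobservable with respect to $\hat{\mathcal W}^{\rm out}$, i.e. the columns of $T$ lie in $\mathrm{Ker}(\mathcal{C}^\top)\cap\mathrm{Ker}(\mathcal{O})$ (equivalently $\mathrm{Ker}(\mathcal{C}^\top)\cap\mathrm{Ker}(\mathcal{O})$ is nontrivial), and (ii) whose variable satisfies the canonical commutation relation, i.e. $T^\top\Sigma_nT=\Sigma_\ell$ for some $\ell\ge1$; such $\hat x_{\rm DF}$ is called a DF mode. *)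

theory Defs
  imports Complex_Main "Jordan_Normal_Form.Matrix_Kernel"
begin

text \<open>Sigma_k = diag(Sigma,...,Sigma), a 2k x 2k real matrix, Sigma = [[0,1],[-1,0]].\<close>
definition Sigma_mat :: "nat \<Rightarrow> real mat" where
  "Sigma_mat k = mat (2*k) (2*k) (\<lambda>(i,j).
      if even i \<and> j = i + 1 then 1
      else if odd i \<and> j + 1 = i then -1 else 0)"

definition drift_mat :: "nat \<Rightarrow> nat \<Rightarrow> real mat \<Rightarrow> real mat \<Rightarrow> real mat" where
  "drift_mat n m G C = Sigma_mat n * (G + (1/2) \<cdot>\<^sub>m (transpose_mat C * Sigma_mat m * C))"

definition input_mat :: "nat \<Rightarrow> nat \<Rightarrow> real mat \<Rightarrow> real mat" where
  "input_mat n m C = Sigma_mat n * transpose_mat C * Sigma_mat m"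

text \<open>Controllability matrix (B, AB, ..., A^(2n-1) B), of size 2n x (2n * 2m).\<close>
definition ctrb_mat :: "nat \<Rightarrow> nat \<Rightarrow> real mat \<Rightarrow> real mat \<Rightarrow> real mat" where
  "ctrb_mat n m G C = mat (2*n) (2*n * (2*m)) (\<lambda>(i,j).
      ((drift_mat n m G C ^\<^sub>m (j div (2*m))) * input_mat n m C) $$ (i, j mod (2*m)))"

text \<open>Observability matrix (C^T, A^T C^T, ..., (A^T)^(2n-1) C^T)^T, i.e. block rows
  C, C A, ..., C A^(2n-1); size (2n * 2m) x 2n.\<close>
definition obsv_mat :: "nat \<Rightarrow> nat \<Rightarrow> real mat \<Rightarrow> real mat \<Rightarrow> real mat" where
  "obsv_mat n m G C = mat (2*n * (2*m)) (2*n) (\<lambda>(i,j).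
      (C * (drift_mat n m G C ^\<^sub>m (i div (2*m)))) $$ (i mod (2*m), j))"

definition mat_range :: "real mat \<Rightarrow> real vec set" where
  "mat_range T = {T *\<^sub>v w | w. w \<in> carrier_vec (dim_col T)}"

definition is_DF_mode :: "nat \<Rightarrow> nat \<Rightarrow> real mat \<Rightarrow> real mat \<Rightarrow> nat \<Rightarrow> real mat \<Rightarrow> bool" where
  "is_DF_mode n m G C l T \<longleftrightarrow>
     l \<ge> 1 \<and> T \<in> carrier_mat (2*n) (2*l) \<and>
     (\<forall>j < 2*l. col T j \<noteq> 0\<^sub>v (2*n) \<and>
        col T j \<in> mat_kernel (transpose_mat (ctrb_mat n m G C)) \<inter> mat_kernel (obsv_mat n m G C)) \<and>
     transpose_mat T * Sigma_mat n * T = Sigma_mat l"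

definition has_DF_subsystem :: "nat \<Rightarrow> nat \<Rightarrow> real mat \<Rightarrow> real mat \<Rightarrow> bool" where
  "has_DF_subsystem n m G C \<longleftrightarrow> (\<exists>l T. is_DF_mode n m G C l T)"

end

theory Submission
  imports Defs
begin



definition sp :: "nat \<Rightarrow> nat" where "sp i = (if even i then i+1 else i-1)"
definition ss :: "nat \<Rightarrow> real" where "ss i = (if even i then 1 else -1)"

lemma Sigma_carrier[simp]: "Sigma_mat k \<in> carrier_mat (2*k) (2*k)"
  unfolding Sigma_mat_def by auto

lemma Sigma_dims[simp]: "dim_row (Sigma_mat k) = 2*k" "dim_col (Sigma_mat k) = 2*k"
  unfolding Sigma_mat_def by auto

lemma Sigma_entry: "i < 2*k \<Longrightarrow> j < 2*k \<Longrightarrow> Sigma_mat k $$ (i,j) = (if j = sp i then ss i else 0)"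
  unfolding Sigma_mat_def sp_def ss_def by auto

lemma sp_lt: "i < 2*k \<Longrightarrow> sp i < 2*k" unfolding sp_def by presburger

lemma sp_sp[simp]: "sp (sp i) = i" unfolding sp_def by presburger
lemma ss_sp[simp]: "ss (sp i) = - ss i" unfolding sp_def ss_def by auto
lemma sp_par[simp]: "even (sp i) = odd i" unfolding sp_def by presburger
lemma sp_eq: "(j = sp i) = (i = sp j)" by (metis sp_sp)


lemma Sigma_transpose: "transpose_mat (Sigma_mat k) = - Sigma_mat k"
proof (rule eq_matI)
  fix i j assume "i < dim_row (- Sigma_mat k)" "j < dim_col (- Sigma_mat k)"
  thus "transpose_mat (Sigma_mat k) $$ (i,j) = (- Sigma_mat k) $$ (i,j)"
    by (auto simp: Sigma_entry sp_eq)
qed auto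

lemma Sigma_sq: "Sigma_mat k * Sigma_mat k = - 1\<^sub>m (2*k)"
proof (rule eq_matI)
  fix i j assume i: "i < dim_row (- 1\<^sub>m (2*k))" and j: "j < dim_col (- 1\<^sub>m (2*k))"
  hence i': "i < 2*k" and j': "j < 2*k" by auto
  have "(Sigma_mat k * Sigma_mat k) $$ (i,j) = (\<Sum>l\<in>{0..<2*k}. Sigma_mat k $$ (i,l) * Sigma_mat k $$ (l,j))"
    using i' j' by (simp add: scalar_prod_def)
  also have "\<dots> = (\<Sum>l\<in>{0..<2*k}. if l = sp i then ss i * Sigma_mat k $$ (l,j) else 0)"
    by (rule sum.cong, auto simp: Sigma_entry i')
  also have "\<dots> = ss i * Sigma_mat k $$ (sp i, j)" using sp_lt[OF i'] by simp
  also have "\<dots> = (- 1\<^sub>m (2*k)) $$ (i,j)" using i' j' sp_lt[OF i']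
    by (auto simp: Sigma_entry sp_eq ss_def)
  finally show "(Sigma_mat k * Sigma_mat k) $$ (i,j) = (- 1\<^sub>m (2*k)) $$ (i,j)" .
qed auto

lemma Sigma_vec_carrier[simp]: "Sigma_mat k *\<^sub>v x \<in> carrier_vec (2*k)"
  unfolding carrier_vec_def by simp




lemma pow_commute: "X \<in> carrier_mat N N \<Longrightarrow> X ^\<^sub>m k * X = X * X ^\<^sub>m k"
proof (induction k)
  case 0 thus ?case by simp
next
  case (Suc k)
  have "X ^\<^sub>m Suc k * X = (X ^\<^sub>m k * X) * X" by simp
  also have "\<dots> = (X * X ^\<^sub>m k) * X" using Suc by simp
  also have "\<dots> = X * (X ^\<^sub>m k * X)" using Suc.prems
    by (intro assoc_mult_mat[of _ N N _ N _ N]) auto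
  finally show ?case by simp
qed

lemma pow_Suc_vec: "X \<in> carrier_mat N N \<Longrightarrow> v \<in> carrier_vec N \<Longrightarrow> X ^\<^sub>m Suc k *\<^sub>v v = X *\<^sub>v (X ^\<^sub>m k *\<^sub>v v)"
proof -
  assume X: "X \<in> carrier_mat N N" and v: "v \<in> carrier_vec N"
  have "X ^\<^sub>m Suc k = X * X ^\<^sub>m k" using pow_commute[OF X] by simp
  thus ?thesis using X v assoc_mult_mat_vec[of X N N "X ^\<^sub>m k" N v] by simp
qed

lemma pow_transpose: "(X :: real mat) \<in> carrier_mat N N \<Longrightarrow> transpose_mat (X ^\<^sub>m k) = (transpose_mat X) ^\<^sub>m k"
proof (induction k)
  case 0 thus ?case by simp
next
  case (Suc k)
  have "transpose_mat (X ^\<^sub>m Suc k) = transpose_mat X * transpose_mat (X ^\<^sub>m k)"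
    using Suc.prems transpose_mult[of "X ^\<^sub>m k" N N X N] by simp
  also have "\<dots> = transpose_mat X * (transpose_mat X) ^\<^sub>m k" using Suc by simp
  also have "\<dots> = (transpose_mat X) ^\<^sub>m k * transpose_mat X"
    using pow_commute[of "transpose_mat X" N k] Suc.prems by simp
  finally show ?case by simp
qed

lemma smult_mat_vec: "v \<in> carrier_vec (dim_col X) \<Longrightarrow> (a \<cdot>\<^sub>m (X::real mat)) *\<^sub>v v = a \<cdot>\<^sub>v (X *\<^sub>v v)"
  by (intro eq_vecI) (auto simp: scalar_prod_def sum_distrib_left algebra_simps intro!: sum.cong)

lemma mat_vec_uminus: "v \<in> carrier_vec (dim_col X) \<Longrightarrow> (X :: real mat) *\<^sub>v (- v) = - (X *\<^sub>v v)"
  by (intro eq_vecI) auto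

lemma vec_arith1: "a \<in> carrier_vec N \<Longrightarrow> b \<in> carrier_vec N \<Longrightarrow> - a + (1/2) \<cdot>\<^sub>v b = - (a + (1/2) \<cdot>\<^sub>v b) + (b :: real vec)"
  by (intro eq_vecI) auto

lemma Sigma_sq_vec: "x \<in> carrier_vec (2*k) \<Longrightarrow> Sigma_mat k *\<^sub>v (Sigma_mat k *\<^sub>v x) = - x"
proof -
  assume x: "x \<in> carrier_vec (2*k)"
  have "Sigma_mat k *\<^sub>v (Sigma_mat k *\<^sub>v x) = (Sigma_mat k * Sigma_mat k) *\<^sub>v x"
    using x by (simp add: assoc_mult_mat_vec[of _ "2*k" "2*k" _ "2*k"])
  also have "\<dots> = - x" using x by (simp add: Sigma_sq)
  finally show ?thesis .
qed

locale qs =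
  fixes n m :: nat and G C :: "real mat"
  assumes G: "G \<in> carrier_mat (2*n) (2*n)" and GT: "transpose_mat G = G"
    and C: "C \<in> carrier_mat (2*m) (2*n)"
begin

abbreviation "S \<equiv> Sigma_mat n"
abbreviation "Sm \<equiv> Sigma_mat m"
abbreviation "P \<equiv> transpose_mat C * Sm * C"
abbreviation "A \<equiv> drift_mat n m G C"

lemma P_carrier[simp]: "P \<in> carrier_mat (2*n) (2*n)" using C by auto
lemma A_carrier[simp]: "A \<in> carrier_mat (2*n) (2*n)" using G C unfolding drift_mat_def by auto

lemma P_dims[simp]: "dim_row P = 2*n" "dim_col P = 2*n" using C by auto

lemma PT: "transpose_mat P = - P"
proof -
  have CT: "transpose_mat C \<in> carrier_mat (2*n) (2*m)" using C by simp
  have "transpose_mat P = transpose_mat C * transpose_mat (transpose_mat C * Sm)"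
    using transpose_mult[of "transpose_mat C * Sm" "2*n" "2*m" C "2*n"] C by simp
  also have "transpose_mat (transpose_mat C * Sm) = transpose_mat Sm * C"
    using transpose_mult[of "transpose_mat C" "2*n" "2*m" Sm "2*m"] C by simp
  also have "transpose_mat Sm * C = - (Sm * C)" using C by (simp add: Sigma_transpose)
  also have "transpose_mat C * (- (Sm * C)) = - (transpose_mat C * (Sm * C))" using C by simp
  also have "transpose_mat C * (Sm * C) = P"
    using C by (intro assoc_mult_mat[symmetric, of _ "2*n" "2*m" _ "2*m" _ "2*n"]) auto
  finally show ?thesis .
qed

lemma AT_vec: assumes x: "x \<in> carrier_vec (2*n)"
  shows "transpose_mat A *\<^sub>v x = - (G *\<^sub>v (S *\<^sub>v x)) + (1/2) \<cdot>\<^sub>v (P *\<^sub>v (S *\<^sub>v x))"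
proof -
  have H: "G + (1/2) \<cdot>\<^sub>m P \<in> carrier_mat (2*n) (2*n)" using G by auto
  have "transpose_mat A = transpose_mat (G + (1/2) \<cdot>\<^sub>m P) * transpose_mat S"
    unfolding drift_mat_def using H by (simp add: transpose_mult[of _ "2*n" "2*n" _ "2*n"])
  also have "transpose_mat (G + (1/2) \<cdot>\<^sub>m P) = G - (1/2) \<cdot>\<^sub>m P"
  proof -
    have g: "G $$ (j,i) = G $$ (i,j)" if "i < 2*n" "j < 2*n" for i j
      using arg_cong[OF GT, of "\<lambda>M. M $$ (i,j)"] G that by auto
    have p: "P $$ (j,i) = - P $$ (i,j)" if "i < 2*n" "j < 2*n" for i j
    proof -
      have "transpose_mat P $$ (i,j) = (- P) $$ (i,j)" using PT by simp
      moreover have "transpose_mat P $$ (i,j) = P $$ (j,i)"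
        using that C by (intro index_transpose_mat(1)) simp_all
      moreover have "(- P) $$ (i,j) = - P $$ (i,j)"
        using that C by (intro index_uminus_mat(1)) simp_all
      ultimately show ?thesis by simp
    qed
    show ?thesis
    proof (rule eq_matI)
      fix i j assume ij: "i < dim_row (G - (1/2) \<cdot>\<^sub>m P)" "j < dim_col (G - (1/2) \<cdot>\<^sub>m P)"
      hence i: "i < 2*n" and j: "j < 2*n" using G C by auto
      have "transpose_mat (G + (1/2) \<cdot>\<^sub>m P) $$ (i,j) = G $$ (j,i) + (1/2) * P $$ (j,i)"
        using i j G by (simp del: index_mult_mat)
      also have "\<dots> = G $$ (i,j) - (1/2) * P $$ (i,j)" using g[OF i j] p[OF i j] by simp
      also have "\<dots> = (G - (1/2) \<cdot>\<^sub>m P) $$ (i,j)" using i j G by (simp del: index_mult_mat)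
      finally show "transpose_mat (G + (1/2) \<cdot>\<^sub>m P) $$ (i,j) = (G - (1/2) \<cdot>\<^sub>m P) $$ (i,j)" .
    qed (use G in auto)
  qed
  finally have T: "transpose_mat A = (G - (1/2) \<cdot>\<^sub>m P) * (- S)" by (simp add: Sigma_transpose)
  have hP: "(1/2) \<cdot>\<^sub>m P \<in> carrier_mat (2*n) (2*n)" by simp
  have HG: "G - (1/2) \<cdot>\<^sub>m P \<in> carrier_mat (2*n) (2*n)" using minus_carrier_mat[OF hP] by simp
  have MS: "- S \<in> carrier_mat (2*n) (2*n)" by simp
  have 1: "transpose_mat A *\<^sub>v x = (G - (1/2) \<cdot>\<^sub>m P) *\<^sub>v ((- S) *\<^sub>v x)"
    unfolding T by (rule assoc_mult_mat_vec[OF HG MS x])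
  have 2: "(- S) *\<^sub>v x = - (S *\<^sub>v x)" using x by (intro eq_vecI) auto
  have z: "S *\<^sub>v x \<in> carrier_vec (2*n)" by simp
  have 3: "(G - (1/2) \<cdot>\<^sub>m P) *\<^sub>v (- (S *\<^sub>v x)) = - (G *\<^sub>v (S *\<^sub>v x)) + (1/2) \<cdot>\<^sub>v (P *\<^sub>v (S *\<^sub>v x))"
  proof -
    have e1: "(G - (1/2) \<cdot>\<^sub>m P) *\<^sub>v (- (S *\<^sub>v x)) = - ((G - (1/2) \<cdot>\<^sub>m P) *\<^sub>v (S *\<^sub>v x))"
      using HG z carrier_matD(2)[OF C] by (intro mat_vec_uminus) simp
    have e2: "(G - (1/2) \<cdot>\<^sub>m P) *\<^sub>v (S *\<^sub>v x) = G *\<^sub>v (S *\<^sub>v x) - ((1/2) \<cdot>\<^sub>m P) *\<^sub>v (S *\<^sub>v x)"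
      by (rule minus_mult_distrib_mat_vec[OF G hP z])
    have e3: "((1/2) \<cdot>\<^sub>m P) *\<^sub>v (S *\<^sub>v x) = (1/2) \<cdot>\<^sub>v (P *\<^sub>v (S *\<^sub>v x))"
      using z carrier_matD(2)[OF C] by (intro smult_mat_vec) auto
    have e4: "- (G *\<^sub>v (S *\<^sub>v x) - (1/2) \<cdot>\<^sub>v (P *\<^sub>v (S *\<^sub>v x))) = - (G *\<^sub>v (S *\<^sub>v x)) + (1/2) \<cdot>\<^sub>v (P *\<^sub>v (S *\<^sub>v x))"
      using G C by (intro eq_vecI) auto
    show ?thesis unfolding e1 e2 e3 e4 ..
  qed
  have 4: "transpose_mat A *\<^sub>v x = (G - (1/2) \<cdot>\<^sub>m P) *\<^sub>v (- (S *\<^sub>v x))" using 1 unfolding 2 .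
  show ?thesis using trans[OF 4 3] .
qed




lemma key_vec: assumes x: "x \<in> carrier_vec (2*n)"
  shows "S *\<^sub>v (transpose_mat A *\<^sub>v x) = - (A *\<^sub>v (S *\<^sub>v x)) + S *\<^sub>v (P *\<^sub>v (S *\<^sub>v x))"
proof -
  define y where "y = S *\<^sub>v x"
  have y: "y \<in> carrier_vec (2*n)" unfolding y_def by (rule Sigma_vec_carrier)
  have Gy: "G *\<^sub>v y \<in> carrier_vec (2*n)" by (rule mult_mat_vec_carrier[OF G y])
  have Py: "P *\<^sub>v y \<in> carrier_vec (2*n)" by (rule mult_mat_vec_carrier[OF P_carrier y])
  have hPy: "(1/2) \<cdot>\<^sub>v (P *\<^sub>v y) \<in> carrier_vec (2*n)" using Py by (rule smult_carrier_vec[THEN iffD2])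
  have mGy: "- (G *\<^sub>v y) \<in> carrier_vec (2*n)" using Gy uminus_carrier_vec[of "G *\<^sub>v y"] by blast
  have SC: "S \<in> carrier_mat (2*n) (2*n)" by (rule Sigma_carrier)
  have HP: "(1/2) \<cdot>\<^sub>m P \<in> carrier_mat (2*n) (2*n)" by (rule smult_carrier_mat[OF P_carrier])
  have e1: "transpose_mat A *\<^sub>v x = - (G *\<^sub>v y) + (1/2) \<cdot>\<^sub>v (P *\<^sub>v y)"
    unfolding y_def by (rule AT_vec[OF x])
  have e2: "S *\<^sub>v (- (G *\<^sub>v y) + (1/2) \<cdot>\<^sub>v (P *\<^sub>v y)) = S *\<^sub>v (- (G *\<^sub>v y)) + S *\<^sub>v ((1/2) \<cdot>\<^sub>v (P *\<^sub>v y))"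
    by (rule mult_add_distrib_mat_vec[OF SC mGy hPy])
  have e3: "S *\<^sub>v (- (G *\<^sub>v y)) = - (S *\<^sub>v (G *\<^sub>v y))"
    by (rule mat_vec_uminus) (simp only: Sigma_dims Gy)
  have e4: "S *\<^sub>v ((1/2) \<cdot>\<^sub>v (P *\<^sub>v y)) = (1/2) \<cdot>\<^sub>v (S *\<^sub>v (P *\<^sub>v y))"
    by (rule mult_mat_vec[OF SC Py])
  have f1: "drift_mat n m G C = S * (G + (1/2) \<cdot>\<^sub>m P)" unfolding drift_mat_def ..
  have GH: "G + (1/2) \<cdot>\<^sub>m P \<in> carrier_mat (2*n) (2*n)" by (rule add_carrier_mat[OF HP])
  have f2: "A *\<^sub>v y = S *\<^sub>v ((G + (1/2) \<cdot>\<^sub>m P) *\<^sub>v y)"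
    unfolding f1 by (rule assoc_mult_mat_vec[OF SC GH y])
  have f3: "(G + (1/2) \<cdot>\<^sub>m P) *\<^sub>v y = G *\<^sub>v y + ((1/2) \<cdot>\<^sub>m P) *\<^sub>v y"
    by (rule add_mult_distrib_mat_vec[OF G HP y])
  have f4: "((1/2) \<cdot>\<^sub>m P) *\<^sub>v y = (1/2) \<cdot>\<^sub>v (P *\<^sub>v y)"
    by (rule smult_mat_vec) (simp only: P_dims y)
  have f5: "S *\<^sub>v (G *\<^sub>v y + (1/2) \<cdot>\<^sub>v (P *\<^sub>v y)) = S *\<^sub>v (G *\<^sub>v y) + S *\<^sub>v ((1/2) \<cdot>\<^sub>v (P *\<^sub>v y))"
    by (rule mult_add_distrib_mat_vec[OF SC Gy hPy])
  have fin: "- (S *\<^sub>v (G *\<^sub>v y)) + (1/2) \<cdot>\<^sub>v (S *\<^sub>v (P *\<^sub>v y)) = - (S *\<^sub>v (G *\<^sub>v y) + (1/2) \<cdot>\<^sub>v (S *\<^sub>v (P *\<^sub>v y))) + S *\<^sub>v (P *\<^sub>v y)"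
    by (rule vec_arith1[of _ "2*n"]) (rule Sigma_vec_carrier)+
  show ?thesis unfolding y_def[symmetric] e1 e2 e3 e4 f2 f3 f4 f5 by (rule fin)
qed

end



lemma Sigma_T_vec: "y \<in> carrier_vec (2*k) \<Longrightarrow> transpose_mat (Sigma_mat k) *\<^sub>v y = - (Sigma_mat k *\<^sub>v y)"
  unfolding Sigma_transpose by (rule uminus_mult_mat_vec) simp

lemma VS1: assumes x: "x \<in> carrier_vec (2*k)" and y: "y \<in> carrier_vec (2*k)"
  shows "(Sigma_mat k *\<^sub>v x) \<bullet> y = - (x \<bullet> (Sigma_mat k *\<^sub>v y))"
proof -
  have "(Sigma_mat k *\<^sub>v x) \<bullet> y = y \<bullet> (Sigma_mat k *\<^sub>v x)"
    by (rule comm_scalar_prod[OF Sigma_vec_carrier y])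
  also have "\<dots> = (transpose_mat (Sigma_mat k) *\<^sub>v y) \<bullet> x"
    by (rule transpose_vec_mult_scalar[OF Sigma_carrier x y, symmetric])
  also have "\<dots> = (- (Sigma_mat k *\<^sub>v y)) \<bullet> x" by (simp only: Sigma_T_vec[OF y])
  also have "\<dots> = - ((Sigma_mat k *\<^sub>v y) \<bullet> x)" by (rule scalar_prod_uminus_left) (use x in simp)
  also have "(Sigma_mat k *\<^sub>v y) \<bullet> x = x \<bullet> (Sigma_mat k *\<^sub>v y)"
    by (rule comm_scalar_prod[OF Sigma_vec_carrier x])
  finally show ?thesis .
qed

lemma VS2: assumes x: "x \<in> carrier_vec (2*k)" and y: "y \<in> carrier_vec (2*k)"
  shows "(Sigma_mat k *\<^sub>v x) \<bullet> (Sigma_mat k *\<^sub>v y) = x \<bullet> y"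
proof -
  have "(Sigma_mat k *\<^sub>v x) \<bullet> (Sigma_mat k *\<^sub>v y) = - (x \<bullet> (Sigma_mat k *\<^sub>v (Sigma_mat k *\<^sub>v y)))"
    by (rule VS1[OF x Sigma_vec_carrier])
  also have "Sigma_mat k *\<^sub>v (Sigma_mat k *\<^sub>v y) = - y" by (rule Sigma_sq_vec[OF y])
  also have "x \<bullet> (- y) = - (x \<bullet> y)" by (rule scalar_prod_uminus_right) (use x y in simp)
  finally show ?thesis by simp
qed

lemma VS3: assumes x: "x \<in> carrier_vec (2*k)"
  shows "x \<bullet> (Sigma_mat k *\<^sub>v x) = 0"
proof -
  have "(Sigma_mat k *\<^sub>v x) \<bullet> x = - (x \<bullet> (Sigma_mat k *\<^sub>v x))" by (rule VS1[OF x x])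
  moreover have "(Sigma_mat k *\<^sub>v x) \<bullet> x = x \<bullet> (Sigma_mat k *\<^sub>v x)"
    by (rule comm_scalar_prod[OF Sigma_vec_carrier x])
  ultimately show ?thesis by linarith
qed

lemma mv_entry: "X \<in> carrier_mat a b \<Longrightarrow> v \<in> carrier_vec b \<Longrightarrow> r < a \<Longrightarrow>
  (X *\<^sub>v v) $ r = (\<Sum>j\<in>{0..<b}. X $$ (r,j) * v $ j)"
  by (simp add: scalar_prod_def)

lemma vec_zero_iff: "x \<in> carrier_vec N \<Longrightarrow> (x = 0\<^sub>v N) = (\<forall>i<N. x $ i = (0::real))"
  by auto

context qs
begin

abbreviation "Ob \<equiv> obsv_mat n m G C"
abbreviation "Ct \<equiv> ctrb_mat n m G C"
abbreviation "B \<equiv> input_mat n m C"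

lemma Ob_carrier: "Ob \<in> carrier_mat (2*n*(2*m)) (2*n)" unfolding obsv_mat_def by simp
lemma Ct_carrier: "Ct \<in> carrier_mat (2*n) (2*n*(2*m))" unfolding ctrb_mat_def by simp
lemma CT_carrier: "transpose_mat C \<in> carrier_mat (2*n) (2*m)" using C by simp
lemma B_carrier: "B \<in> carrier_mat (2*n) (2*m)" unfolding input_mat_def
  by (rule mult_carrier_mat[OF mult_carrier_mat[OF Sigma_carrier CT_carrier] Sigma_carrier])
lemma Apow_carrier: "A ^\<^sub>m q \<in> carrier_mat (2*n) (2*n)" by (rule pow_carrier_mat[OF A_carrier])
lemma CA_carrier: "C * A ^\<^sub>m q \<in> carrier_mat (2*m) (2*n)" by (rule mult_carrier_mat[OF C Apow_carrier])
lemma AB_carrier: "A ^\<^sub>m q * B \<in> carrier_mat (2*n) (2*m)" by (rule mult_carrier_mat[OF Apow_carrier B_carrier])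

lemma obsv_entry: assumes v: "v \<in> carrier_vec (2*n)" and i: "i < 2*n*(2*m)"
  shows "(Ob *\<^sub>v v) $ i = (C *\<^sub>v (A ^\<^sub>m (i div (2*m)) *\<^sub>v v)) $ (i mod (2*m))"
proof -
  define q where "q = i div (2*m)"
  define r where "r = i mod (2*m)"
  have mpos: "0 < 2*m" using i by (cases m) auto
  have r: "r < 2*m" unfolding r_def using mpos by simp
  have "(Ob *\<^sub>v v) $ i = (\<Sum>j\<in>{0..<2*n}. Ob $$ (i,j) * v $ j)" by (rule mv_entry[OF Ob_carrier v i])
  also have "\<dots> = (\<Sum>j\<in>{0..<2*n}. (C * A ^\<^sub>m q) $$ (r,j) * v $ j)"
    by (rule sum.cong[OF refl]) (use i in \<open>simp add: obsv_mat_def q_def r_def\<close>)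
  also have "\<dots> = ((C * A ^\<^sub>m q) *\<^sub>v v) $ r" by (rule mv_entry[OF CA_carrier v r, symmetric])
  also have "(C * A ^\<^sub>m q) *\<^sub>v v = C *\<^sub>v (A ^\<^sub>m q *\<^sub>v v)" by (rule assoc_mult_mat_vec[OF C Apow_carrier v])
  finally show ?thesis unfolding q_def r_def .
qed

lemma obsv_zero: assumes v: "v \<in> carrier_vec (2*n)"
  shows "(Ob *\<^sub>v v = 0\<^sub>v (2*n*(2*m))) = (\<forall>q<2*n. C *\<^sub>v (A ^\<^sub>m q *\<^sub>v v) = 0\<^sub>v (2*m))"
proof
  assume h: "Ob *\<^sub>v v = 0\<^sub>v (2*n*(2*m))"
  show "\<forall>q<2*n. C *\<^sub>v (A ^\<^sub>m q *\<^sub>v v) = 0\<^sub>v (2*m)"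
  proof (intro allI impI)
    fix q assume q: "q < 2*n"
    have cv: "C *\<^sub>v (A ^\<^sub>m q *\<^sub>v v) \<in> carrier_vec (2*m)"
      by (rule mult_mat_vec_carrier[OF C mult_mat_vec_carrier[OF Apow_carrier v]])
    show "C *\<^sub>v (A ^\<^sub>m q *\<^sub>v v) = 0\<^sub>v (2*m)"
    proof (rule vec_zero_iff[OF cv, THEN iffD2], intro allI impI)
      fix r assume r: "r < 2*m"
      define i where "i = q * (2*m) + r"
      have i: "i < 2*n*(2*m)"
      proof -
        have "q * (2*m) + r < q * (2*m) + 2*m" using r by simp
        also have "\<dots> = Suc q * (2*m)" by simp
        also have "\<dots> \<le> 2*n*(2*m)" using q by (intro mult_right_mono) auto
        finally show ?thesis unfolding i_def .
      qed
      have qd: "i div (2*m) = q" and rm: "i mod (2*m) = r" unfolding i_def using r by auto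
      have "(Ob *\<^sub>v v) $ i = 0" using h i by simp
      thus "(C *\<^sub>v (A ^\<^sub>m q *\<^sub>v v)) $ r = 0" using obsv_entry[OF v i] unfolding qd rm by simp
    qed
  qed
next
  assume h: "\<forall>q<2*n. C *\<^sub>v (A ^\<^sub>m q *\<^sub>v v) = 0\<^sub>v (2*m)"
  have ov: "Ob *\<^sub>v v \<in> carrier_vec (2*n*(2*m))" by (rule mult_mat_vec_carrier[OF Ob_carrier v])
  show "Ob *\<^sub>v v = 0\<^sub>v (2*n*(2*m))"
  proof (rule vec_zero_iff[OF ov, THEN iffD2], intro allI impI)
    fix i assume i: "i < 2*n*(2*m)"
    have mpos: "0 < 2*m" using i by (cases m) auto
    have q: "i div (2*m) < 2*n" using i by (simp add: less_mult_imp_div_less)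
    have r: "i mod (2*m) < 2*m" using mpos by simp
    show "(Ob *\<^sub>v v) $ i = 0" unfolding obsv_entry[OF v i] using h q r by simp
  qed
qed

end



lemma mat_vec_zero: "X \<in> carrier_mat a b \<Longrightarrow> X *\<^sub>v 0\<^sub>v b = (0\<^sub>v a :: real vec)"
  by (intro eq_vecI) auto

lemma vec_arith2: "z \<in> carrier_vec N \<Longrightarrow> - (c \<cdot>\<^sub>v z) + 0\<^sub>v N = (- c) \<cdot>\<^sub>v (z :: real vec)"
  by (intro eq_vecI) auto

lemma smult_zero_iff: "(c::real) \<noteq> 0 \<Longrightarrow> u \<in> carrier_vec N \<Longrightarrow> (c \<cdot>\<^sub>v u = 0\<^sub>v N) = (u = 0\<^sub>v N)"
proof
  assume c: "c \<noteq> 0" and u: "u \<in> carrier_vec N" and h: "c \<cdot>\<^sub>v u = 0\<^sub>v N"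
  show "u = 0\<^sub>v N"
  proof (intro eq_vecI)
    fix i assume "i < dim_vec (0\<^sub>v N :: real vec)"
    hence i: "i < N" by simp
    have "(c \<cdot>\<^sub>v u) $ i = 0" using h i by simp
    hence "c * u $ i = 0" using u i by simp
    thus "u $ i = 0\<^sub>v N $ i" using c i by simp
  qed (use u in simp)
qed (auto intro!: eq_vecI)

lemma Sigma_zero_iff: assumes z: "z \<in> carrier_vec (2*k)"
  shows "(Sigma_mat k *\<^sub>v z = 0\<^sub>v (2*k)) = (z = 0\<^sub>v (2*k))"
proof
  assume h: "Sigma_mat k *\<^sub>v z = 0\<^sub>v (2*k)"
  have "- z = Sigma_mat k *\<^sub>v (Sigma_mat k *\<^sub>v z)" by (rule Sigma_sq_vec[OF z, symmetric])
  also have "\<dots> = 0\<^sub>v (2*k)" unfolding h by (rule mat_vec_zero[OF Sigma_carrier])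
  finally have "- z = 0\<^sub>v (2*k)" .
  thus "z = 0\<^sub>v (2*k)" using z by (metis uminus_zero_vec_eq)
next
  assume "z = 0\<^sub>v (2*k)"
  thus "Sigma_mat k *\<^sub>v z = 0\<^sub>v (2*k)" using mat_vec_zero[OF Sigma_carrier] by simp
qed

context qs
begin

lemma AT_carrier: "transpose_mat A \<in> carrier_mat (2*n) (2*n)" using A_carrier by simp
lemma ATpow_carrier: "(transpose_mat A) ^\<^sub>m q \<in> carrier_mat (2*n) (2*n)" by (rule pow_carrier_mat[OF AT_carrier])

lemma BT: "transpose_mat B = (- Sm) * (C * (- S))"
proof -
  have SCT: "S * transpose_mat C \<in> carrier_mat (2*n) (2*m)" by (rule mult_carrier_mat[OF Sigma_carrier CT_carrier])
  have "transpose_mat B = transpose_mat Sm * transpose_mat (S * transpose_mat C)"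
    unfolding input_mat_def by (rule transpose_mult[OF SCT Sigma_carrier])
  also have "transpose_mat (S * transpose_mat C) = transpose_mat (transpose_mat C) * transpose_mat S"
    by (rule transpose_mult[OF Sigma_carrier CT_carrier])
  finally show ?thesis by (simp only: Sigma_transpose transpose_transpose)
qed

lemma BT_vec: assumes w: "w \<in> carrier_vec (2*n)"
  shows "transpose_mat B *\<^sub>v w = Sm *\<^sub>v (C *\<^sub>v (S *\<^sub>v w))"
proof -
  have mSm: "- Sm \<in> carrier_mat (2*m) (2*m)" by simp
  have mS: "- S \<in> carrier_mat (2*n) (2*n)" by simp
  have CS: "C * (- S) \<in> carrier_mat (2*m) (2*n)" by (rule mult_carrier_mat[OF C mS])
  have 1: "transpose_mat B *\<^sub>v w = (- Sm) *\<^sub>v ((C * (- S)) *\<^sub>v w)"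
    unfolding BT by (rule assoc_mult_mat_vec[OF mSm CS w])
  have 2: "(C * (- S)) *\<^sub>v w = C *\<^sub>v ((- S) *\<^sub>v w)" by (rule assoc_mult_mat_vec[OF C mS w])
  have 3: "(- S) *\<^sub>v w = - (S *\<^sub>v w)" by (rule uminus_mult_mat_vec) (use w in simp)
  have 4: "C *\<^sub>v (- (S *\<^sub>v w)) = - (C *\<^sub>v (S *\<^sub>v w))" by (rule mat_vec_uminus) (use C in simp)
  have cs: "C *\<^sub>v (S *\<^sub>v w) \<in> carrier_vec (2*m)" by (rule mult_mat_vec_carrier[OF C Sigma_vec_carrier])
  have 5: "(- Sm) *\<^sub>v (- (C *\<^sub>v (S *\<^sub>v w))) = - (Sm *\<^sub>v (- (C *\<^sub>v (S *\<^sub>v w))))"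
    by (rule uminus_mult_mat_vec) (use cs C in simp)
  have 6: "Sm *\<^sub>v (- (C *\<^sub>v (S *\<^sub>v w))) = - (Sm *\<^sub>v (C *\<^sub>v (S *\<^sub>v w)))"
    by (rule mat_vec_uminus) (use cs C in simp)
  have 7: "- (- (Sm *\<^sub>v (C *\<^sub>v (S *\<^sub>v w)))) = Sm *\<^sub>v (C *\<^sub>v (S *\<^sub>v w))"
    by (intro eq_vecI) simp_all
  show ?thesis unfolding 1 2 3 4 5 6 7 ..
qed

lemma ctrb_entry: assumes v: "v \<in> carrier_vec (2*n)" and i: "i < 2*n*(2*m)"
  shows "(transpose_mat Ct *\<^sub>v v) $ i = (Sm *\<^sub>v (C *\<^sub>v (S *\<^sub>v ((transpose_mat A) ^\<^sub>m (i div (2*m)) *\<^sub>v v)))) $ (i mod (2*m))"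
proof -
  define q where "q = i div (2*m)"
  define r where "r = i mod (2*m)"
  have mpos: "0 < 2*m" using i by (cases m) auto
  have r: "r < 2*m" unfolding r_def using mpos by simp
  have CtT: "transpose_mat Ct \<in> carrier_mat (2*n*(2*m)) (2*n)" using Ct_carrier by simp
  have ABT: "transpose_mat (A ^\<^sub>m q * B) \<in> carrier_mat (2*m) (2*n)" using AB_carrier by simp
  have "(transpose_mat Ct *\<^sub>v v) $ i = (\<Sum>j\<in>{0..<2*n}. transpose_mat Ct $$ (i,j) * v $ j)"
    by (rule mv_entry[OF CtT v i])
  also have "\<dots> = (\<Sum>j\<in>{0..<2*n}. transpose_mat (A ^\<^sub>m q * B) $$ (r,j) * v $ j)"
  proof (rule sum.cong[OF refl])
    fix j assume j: "j \<in> {0..<2*n}"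
    have "transpose_mat Ct $$ (i,j) = Ct $$ (j,i)" using i j Ct_carrier by simp
    also have "\<dots> = (A ^\<^sub>m q * B) $$ (j, r)" using i j unfolding ctrb_mat_def q_def r_def by simp
    also have "\<dots> = transpose_mat (A ^\<^sub>m q * B) $$ (r,j)"
      by (rule index_transpose_mat(1)[symmetric]) (use r j AB_carrier[of q] in auto)
    finally show "transpose_mat Ct $$ (i,j) * v $ j = transpose_mat (A ^\<^sub>m q * B) $$ (r,j) * v $ j" by simp
  qed
  also have "\<dots> = (transpose_mat (A ^\<^sub>m q * B) *\<^sub>v v) $ r" by (rule mv_entry[OF ABT v r, symmetric])
  also have "transpose_mat (A ^\<^sub>m q * B) = transpose_mat B * transpose_mat (A ^\<^sub>m q)"
    by (rule transpose_mult[OF Apow_carrier B_carrier])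
  also have "transpose_mat (A ^\<^sub>m q) = (transpose_mat A) ^\<^sub>m q" by (rule pow_transpose[OF A_carrier])
  also have "(transpose_mat B * (transpose_mat A) ^\<^sub>m q) *\<^sub>v v = transpose_mat B *\<^sub>v ((transpose_mat A) ^\<^sub>m q *\<^sub>v v)"
    by (rule assoc_mult_mat_vec[OF _ ATpow_carrier v]) (use B_carrier in simp)
  also have "\<dots> = Sm *\<^sub>v (C *\<^sub>v (S *\<^sub>v ((transpose_mat A) ^\<^sub>m q *\<^sub>v v)))"
    by (rule BT_vec[OF mult_mat_vec_carrier[OF ATpow_carrier v]])
  finally show ?thesis unfolding q_def r_def .
qed

lemma ctrb_zero: assumes v: "v \<in> carrier_vec (2*n)"
  shows "(transpose_mat Ct *\<^sub>v v = 0\<^sub>v (2*n*(2*m))) = (\<forall>q<2*n. C *\<^sub>v (S *\<^sub>v ((transpose_mat A) ^\<^sub>m q *\<^sub>v v)) = 0\<^sub>v (2*m))"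
proof
  assume h: "transpose_mat Ct *\<^sub>v v = 0\<^sub>v (2*n*(2*m))"
  show "\<forall>q<2*n. C *\<^sub>v (S *\<^sub>v ((transpose_mat A) ^\<^sub>m q *\<^sub>v v)) = 0\<^sub>v (2*m)"
  proof (intro allI impI)
    fix q assume q: "q < 2*n"
    have cv: "C *\<^sub>v (S *\<^sub>v ((transpose_mat A) ^\<^sub>m q *\<^sub>v v)) \<in> carrier_vec (2*m)"
      by (rule mult_mat_vec_carrier[OF C Sigma_vec_carrier])
    have "Sm *\<^sub>v (C *\<^sub>v (S *\<^sub>v ((transpose_mat A) ^\<^sub>m q *\<^sub>v v))) = 0\<^sub>v (2*m)"
    proof (rule vec_zero_iff[OF Sigma_vec_carrier, THEN iffD2], intro allI impI)
      fix r assume r: "r < 2*m"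
      define i where "i = q * (2*m) + r"
      have i: "i < 2*n*(2*m)"
      proof -
        have "q * (2*m) + r < q * (2*m) + 2*m" using r by simp
        also have "\<dots> = Suc q * (2*m)" by simp
        also have "\<dots> \<le> 2*n*(2*m)" using q by (intro mult_right_mono) auto
        finally show ?thesis unfolding i_def .
      qed
      have qd: "i div (2*m) = q" and rm: "i mod (2*m) = r" unfolding i_def using r by auto
      have "(transpose_mat Ct *\<^sub>v v) $ i = 0" using h i by simp
      thus "(Sm *\<^sub>v (C *\<^sub>v (S *\<^sub>v ((transpose_mat A) ^\<^sub>m q *\<^sub>v v)))) $ r = 0"
        using ctrb_entry[OF v i] unfolding qd rm by simp
    qed
    thus "C *\<^sub>v (S *\<^sub>v ((transpose_mat A) ^\<^sub>m q *\<^sub>v v)) = 0\<^sub>v (2*m)"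
      using Sigma_zero_iff[OF cv] by simp
  qed
next
  assume h: "\<forall>q<2*n. C *\<^sub>v (S *\<^sub>v ((transpose_mat A) ^\<^sub>m q *\<^sub>v v)) = 0\<^sub>v (2*m)"
  have ov: "transpose_mat Ct *\<^sub>v v \<in> carrier_vec (2*n*(2*m))"
    by (rule mult_mat_vec_carrier[OF _ v]) (use Ct_carrier in simp)
  show "transpose_mat Ct *\<^sub>v v = 0\<^sub>v (2*n*(2*m))"
  proof (rule vec_zero_iff[OF ov, THEN iffD2], intro allI impI)
    fix i assume i: "i < 2*n*(2*m)"
    have mpos: "0 < 2*m" using i by (cases m) auto
    have q: "i div (2*m) < 2*n" using i by (simp add: less_mult_imp_div_less)
    have r: "i mod (2*m) < 2*m" using mpos by simp
    have z: "Sm *\<^sub>v (C *\<^sub>v (S *\<^sub>v ((transpose_mat A) ^\<^sub>m (i div (2*m)) *\<^sub>v v))) = 0\<^sub>v (2*m)"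
      using h q mat_vec_zero[OF Sigma_carrier] by simp
    show "(transpose_mat Ct *\<^sub>v v) $ i = 0" unfolding ctrb_entry[OF v i] z using r by simp
  qed
qed

end



context qs
begin

lemma P_vec: "z \<in> carrier_vec (2*n) \<Longrightarrow> P *\<^sub>v z = transpose_mat C *\<^sub>v (Sm *\<^sub>v (C *\<^sub>v z))"
proof -
  assume z: "z \<in> carrier_vec (2*n)"
  have CS: "transpose_mat C * Sm \<in> carrier_mat (2*n) (2*m)" by (rule mult_carrier_mat[OF CT_carrier Sigma_carrier])
  have "P *\<^sub>v z = (transpose_mat C * Sm) *\<^sub>v (C *\<^sub>v z)" by (rule assoc_mult_mat_vec[OF CS C z])
  also have "\<dots> = transpose_mat C *\<^sub>v (Sm *\<^sub>v (C *\<^sub>v z))"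
    by (rule assoc_mult_mat_vec[OF CT_carrier Sigma_carrier mult_mat_vec_carrier[OF C z]])
  finally show ?thesis .
qed

lemma chain: assumes v: "v \<in> carrier_vec (2*n)"
  shows "(\<forall>j<q. C *\<^sub>v (S *\<^sub>v ((transpose_mat A) ^\<^sub>m j *\<^sub>v v)) = 0\<^sub>v (2*m)) \<Longrightarrow>
    S *\<^sub>v ((transpose_mat A) ^\<^sub>m q *\<^sub>v v) = ((-1::real)^q) \<cdot>\<^sub>v (A ^\<^sub>m q *\<^sub>v (S *\<^sub>v v))"
proof (induction q)
  case 0
  have "(transpose_mat A) ^\<^sub>m 0 *\<^sub>v v = v" using v carrier_matD[OF A_carrier] by simp
  moreover have "A ^\<^sub>m 0 *\<^sub>v (S *\<^sub>v v) = S *\<^sub>v v" using carrier_matD[OF A_carrier] Sigma_vec_carrier by simp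
  ultimately show ?case by simp
next
  case (Suc q)
  define w where "w = (transpose_mat A) ^\<^sub>m q *\<^sub>v v"
  have w: "w \<in> carrier_vec (2*n)" unfolding w_def by (rule mult_mat_vec_carrier[OF ATpow_carrier v])
  have IH: "S *\<^sub>v w = ((-1::real)^q) \<cdot>\<^sub>v (A ^\<^sub>m q *\<^sub>v (S *\<^sub>v v))" unfolding w_def using Suc by simp
  have Cw: "C *\<^sub>v (S *\<^sub>v w) = 0\<^sub>v (2*m)" unfolding w_def using Suc.prems by simp
  have 1: "(transpose_mat A) ^\<^sub>m Suc q *\<^sub>v v = transpose_mat A *\<^sub>v w"
    unfolding w_def by (rule pow_Suc_vec[OF AT_carrier v])
  have 2: "S *\<^sub>v (transpose_mat A *\<^sub>v w) = - (A *\<^sub>v (S *\<^sub>v w)) + S *\<^sub>v (P *\<^sub>v (S *\<^sub>v w))"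
    by (rule key_vec[OF w])
  have 3: "S *\<^sub>v (P *\<^sub>v (S *\<^sub>v w)) = 0\<^sub>v (2*n)"
  proof -
    have "P *\<^sub>v (S *\<^sub>v w) = transpose_mat C *\<^sub>v (Sm *\<^sub>v (C *\<^sub>v (S *\<^sub>v w)))" by (rule P_vec[OF Sigma_vec_carrier])
    also have "\<dots> = 0\<^sub>v (2*n)" unfolding Cw mat_vec_zero[OF Sigma_carrier] by (rule mat_vec_zero[OF CT_carrier])
    finally show ?thesis using mat_vec_zero[OF Sigma_carrier] by simp
  qed
  define u where "u = A ^\<^sub>m q *\<^sub>v (S *\<^sub>v v)"
  have u: "u \<in> carrier_vec (2*n)" unfolding u_def by (rule mult_mat_vec_carrier[OF Apow_carrier Sigma_vec_carrier])
  have 4: "A *\<^sub>v (((-1::real)^q) \<cdot>\<^sub>v u) = ((-1::real)^q) \<cdot>\<^sub>v (A *\<^sub>v u)" by (rule mult_mat_vec[OF A_carrier u])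
  have 5: "A ^\<^sub>m Suc q *\<^sub>v (S *\<^sub>v v) = A *\<^sub>v u" unfolding u_def by (rule pow_Suc_vec[OF A_carrier Sigma_vec_carrier])
  have Au: "A *\<^sub>v u \<in> carrier_vec (2*n)" by (rule mult_mat_vec_carrier[OF A_carrier u])
  have 6: "- (((-1::real)^q) \<cdot>\<^sub>v (A *\<^sub>v u)) + 0\<^sub>v (2*n) = (- ((-1::real)^q)) \<cdot>\<^sub>v (A *\<^sub>v u)"
    by (rule vec_arith2[OF Au])
  show ?case unfolding 1 2 unfolding 3 unfolding IH u_def[symmetric] 4 5 6 by simp
qed

lemma chain_iff: assumes v: "v \<in> carrier_vec (2*n)"
  shows "(\<forall>q<N. C *\<^sub>v (S *\<^sub>v ((transpose_mat A) ^\<^sub>m q *\<^sub>v v)) = 0\<^sub>v (2*m)) =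
         (\<forall>q<N. C *\<^sub>v (A ^\<^sub>m q *\<^sub>v (S *\<^sub>v v)) = 0\<^sub>v (2*m))"
proof (induction N)
  case 0 show ?case by simp
next
  case (Suc N)
  let ?L = "\<lambda>q. C *\<^sub>v (S *\<^sub>v ((transpose_mat A) ^\<^sub>m q *\<^sub>v v)) = 0\<^sub>v (2*m)"
  let ?R = "\<lambda>q. C *\<^sub>v (A ^\<^sub>m q *\<^sub>v (S *\<^sub>v v)) = 0\<^sub>v (2*m)"
  have sL: "(\<forall>q<Suc N. ?L q) = ((\<forall>q<N. ?L q) \<and> ?L N)" by (auto simp: less_Suc_eq)
  have sR: "(\<forall>q<Suc N. ?R q) = ((\<forall>q<N. ?R q) \<and> ?R N)" by (auto simp: less_Suc_eq)
  have key: "?L N = ?R N" if h: "\<forall>q<N. ?L q"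
  proof -
    have e: "S *\<^sub>v ((transpose_mat A) ^\<^sub>m N *\<^sub>v v) = ((-1::real)^N) \<cdot>\<^sub>v (A ^\<^sub>m N *\<^sub>v (S *\<^sub>v v))"
      by (rule chain[OF v h])
    have u: "A ^\<^sub>m N *\<^sub>v (S *\<^sub>v v) \<in> carrier_vec (2*n)" by (rule mult_mat_vec_carrier[OF Apow_carrier Sigma_vec_carrier])
    have "C *\<^sub>v (((-1::real)^N) \<cdot>\<^sub>v (A ^\<^sub>m N *\<^sub>v (S *\<^sub>v v))) = ((-1::real)^N) \<cdot>\<^sub>v (C *\<^sub>v (A ^\<^sub>m N *\<^sub>v (S *\<^sub>v v)))"
      by (rule mult_mat_vec[OF C u])
    moreover have "(((-1::real)^N) \<cdot>\<^sub>v (C *\<^sub>v (A ^\<^sub>m N *\<^sub>v (S *\<^sub>v v))) = 0\<^sub>v (2*m)) = (C *\<^sub>v (A ^\<^sub>m N *\<^sub>v (S *\<^sub>v v)) = 0\<^sub>v (2*m))"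
      by (rule smult_zero_iff[OF _ mult_mat_vec_carrier[OF C u]]) simp
    ultimately show ?thesis unfolding e by simp
  qed
  show ?case unfolding sL sR using Suc.IH key by blast
qed

lemma ker_ctrb: "mat_kernel (transpose_mat Ct) = mat_kernel (Ob * S)"
proof -
  have OS: "Ob * S \<in> carrier_mat (2*n*(2*m)) (2*n)" by (rule mult_carrier_mat[OF Ob_carrier Sigma_carrier])
  have CtT: "transpose_mat Ct \<in> carrier_mat (2*n*(2*m)) (2*n)" using Ct_carrier by simp
  have "v \<in> mat_kernel (transpose_mat Ct) \<longleftrightarrow> v \<in> mat_kernel (Ob * S)" for v
  proof (cases "v \<in> carrier_vec (2*n)")
    case True
    have a: "v \<in> mat_kernel (transpose_mat Ct) \<longleftrightarrow> transpose_mat Ct *\<^sub>v v = 0\<^sub>v (2*n*(2*m))"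
      unfolding mat_kernel_def using True CtT by simp
    have b: "v \<in> mat_kernel (Ob * S) \<longleftrightarrow> Ob *\<^sub>v (S *\<^sub>v v) = 0\<^sub>v (2*n*(2*m))"
      unfolding mat_kernel_def using True OS assoc_mult_mat_vec[OF Ob_carrier Sigma_carrier True] carrier_matD[OF Ob_carrier] by simp
    show ?thesis unfolding a b ctrb_zero[OF True] obsv_zero[OF Sigma_vec_carrier] chain_iff[OF True] ..
  next
    case False
    thus ?thesis unfolding mat_kernel_def using OS CtT by auto
  qed
  thus ?thesis by blast
qed

definition "KK = mat_kernel Ob \<inter> mat_kernel (Ob * S)"

lemma KK_eq: "mat_kernel (transpose_mat Ct) \<inter> mat_kernel Ob = KK"
  unfolding KK_def ker_ctrb by blast

lemma KK_S: assumes v: "v \<in> KK" shows "S *\<^sub>v v \<in> KK"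
proof -
  have OS: "Ob * S \<in> carrier_mat (2*n*(2*m)) (2*n)" by (rule mult_carrier_mat[OF Ob_carrier Sigma_carrier])
  have vc: "v \<in> carrier_vec (2*n)" and o1: "Ob *\<^sub>v v = 0\<^sub>v (2*n*(2*m))" and o2: "(Ob * S) *\<^sub>v v = 0\<^sub>v (2*n*(2*m))"
    using v Ob_carrier OS unfolding KK_def mat_kernel_def by auto
  have e: "(Ob * S) *\<^sub>v x = Ob *\<^sub>v (S *\<^sub>v x)" if "x \<in> carrier_vec (2*n)" for x
    by (rule assoc_mult_mat_vec[OF Ob_carrier Sigma_carrier that])
  have "Ob *\<^sub>v (S *\<^sub>v v) = 0\<^sub>v (2*n*(2*m))" using o2 e[OF vc] by simp
  moreover have "(Ob * S) *\<^sub>v (S *\<^sub>v v) = 0\<^sub>v (2*n*(2*m))"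
  proof -
    have "(Ob * S) *\<^sub>v (S *\<^sub>v v) = Ob *\<^sub>v (- v)" unfolding e[OF Sigma_vec_carrier] Sigma_sq_vec[OF vc] ..
    also have "\<dots> = - (Ob *\<^sub>v v)" by (rule mat_vec_uminus) (use vc Ob_carrier in simp)
    also have "\<dots> = 0\<^sub>v (2*n*(2*m))" unfolding o1 by (intro eq_vecI) auto
    finally show ?thesis .
  qed
  ultimately show ?thesis unfolding KK_def mat_kernel_def using Ob_carrier OS by auto
qed

end



lemma orth_bound: assumes T: "(T :: real mat) \<in> carrier_mat N p" and TT: "transpose_mat T * T = 1\<^sub>m p"
  shows "p \<le> N"
proof (rule ccontr)
  assume "\<not> p \<le> N" hence pN: "N < p" by simp
  define Z where "Z = mat p p (\<lambda>(c,i). if i < N then T $$ (i,c) else 0)"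
  have Zc: "Z \<in> carrier_mat p p" unfolding Z_def by simp
  have ZZ: "Z * transpose_mat Z = 1\<^sub>m p"
  proof (rule eq_matI)
    fix c d assume c: "c < dim_row (1\<^sub>m p :: real mat)" and d: "d < dim_col (1\<^sub>m p :: real mat)"
    hence c: "c < p" and d: "d < p" by auto
    have "(Z * transpose_mat Z) $$ (c,d) = (\<Sum>i\<in>{0..<p}. Z $$ (c,i) * Z $$ (d,i))"
      using c d Zc by (simp add: scalar_prod_def)
    also have "\<dots> = (\<Sum>i\<in>{0..<N}. Z $$ (c,i) * Z $$ (d,i)) + (\<Sum>i\<in>{N..<p}. Z $$ (c,i) * Z $$ (d,i))"
      using pN by (simp add: sum.atLeastLessThan_concat)
    also have "(\<Sum>i\<in>{N..<p}. Z $$ (c,i) * Z $$ (d,i)) = 0"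
      by (rule sum.neutral) (use c d in \<open>auto simp: Z_def\<close>)
    also have "(\<Sum>i\<in>{0..<N}. Z $$ (c,i) * Z $$ (d,i)) = (\<Sum>i\<in>{0..<N}. T $$ (i,c) * T $$ (i,d))"
      by (rule sum.cong[OF refl]) (use c d pN in \<open>auto simp: Z_def\<close>)
    also have "\<dots> = (transpose_mat T * T) $$ (c,d)"
      using c d T by (simp add: scalar_prod_def)
    finally show "(Z * transpose_mat Z) $$ (c,d) = 1\<^sub>m p $$ (c,d)" unfolding TT by simp
  qed (use Zc in auto)
  have "det (Z * transpose_mat Z) = det Z * det (transpose_mat Z)"
    by (rule det_mult[OF Zc]) (use Zc in simp)
  also have "det (transpose_mat Z) = det Z" by (rule det_transpose[OF Zc])
  also have "det Z = 0"
  proof -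
    have e: "unit_vec p (p - 1) \<in> carrier_vec p" by simp
    have ne: "unit_vec p (p - 1) \<noteq> (0\<^sub>v p :: real vec)" using pN by simp
    have "Z *\<^sub>v unit_vec p (p - 1) = 0\<^sub>v p"
    proof (rule eq_vecI)
      fix c assume "c < dim_vec (0\<^sub>v p :: real vec)" hence c: "c < p" by simp
      have "(Z *\<^sub>v unit_vec p (p - 1)) $ c = row Z c \<bullet> unit_vec p (p - 1)" using c Zc by simp
      also have "\<dots> = row Z c $ (p - 1)" using pN by (intro scalar_prod_right_unit) simp
      also have "\<dots> = 0" using c pN by (simp add: Z_def)
      finally show "(Z *\<^sub>v unit_vec p (p - 1)) $ c = 0\<^sub>v p $ c" using c by simp
    qed (use Zc in simp)
    thus ?thesis using det_0_iff_vec_prod_zero_field[OF Zc] e ne by blast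
  qed
  finally have "det (Z * transpose_mat Z) = 0" by simp
  moreover have "det (Z * transpose_mat Z) = 1" unfolding ZZ by simp
  ultimately show False by simp
qed

definition colv :: "nat \<Rightarrow> real vec list \<Rightarrow> nat \<Rightarrow> real vec" where
  "colv k xs c = (if even c then xs ! (c div 2) else - (Sigma_mat k *\<^sub>v (xs ! (c div 2))))"

definition Tm :: "nat \<Rightarrow> real vec list \<Rightarrow> real mat" where
  "Tm k xs = mat (2*k) (2 * length xs) (\<lambda>(r,c). colv k xs c $ r)"

definition orth :: "nat \<Rightarrow> real vec list \<Rightarrow> bool" where
  "orth k xs \<longleftrightarrow> (\<forall>i<length xs. xs!i \<in> carrier_vec (2*k)) \<and>
     (\<forall>i<length xs. \<forall>j<length xs. xs!i \<bullet> xs!j = (if i = j then 1 else 0) \<and> xs!i \<bullet> (Sigma_mat k *\<^sub>v xs!j) = 0)"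

lemma Tm_carrier: "Tm k xs \<in> carrier_mat (2*k) (2 * length xs)" unfolding Tm_def by simp

lemma orth_carrier: "orth k xs \<Longrightarrow> i < length xs \<Longrightarrow> xs!i \<in> carrier_vec (2*k)"
  unfolding orth_def by blast

lemma colv_carrier: assumes o: "orth k xs" and c: "c < 2 * length xs"
  shows "colv k xs c \<in> carrier_vec (2*k)"
proof -
  have i: "c div 2 < length xs" using c by simp
  show ?thesis unfolding colv_def using orth_carrier[OF o i] by simp
qed

lemma Tm_col: assumes o: "orth k xs" and c: "c < 2 * length xs"
  shows "col (Tm k xs) c = colv k xs c"
proof (rule eq_vecI)
  show "dim_vec (col (Tm k xs) c) = dim_vec (colv k xs c)" using colv_carrier[OF o c] by (simp add: Tm_def)
next
  fix r assume "r < dim_vec (colv k xs c)"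
  hence r: "r < 2*k" using colv_carrier[OF o c] by simp
  show "col (Tm k xs) c $ r = colv k xs c $ r" using r c by (simp add: Tm_def)
qed

lemma even_eq: "even (c::nat) \<Longrightarrow> even d \<Longrightarrow> (c = d) = (c div 2 = d div 2)"
  by (auto elim!: evenE)
lemma odd_eq: "odd (c::nat) \<Longrightarrow> odd d \<Longrightarrow> (c = d) = (c div 2 = d div 2)"
  by (auto elim!: oddE)

lemma colv_dot: assumes o: "orth k xs" and c: "c < 2 * length xs" and d: "d < 2 * length xs"
  shows "colv k xs c \<bullet> colv k xs d = (if c = d then 1 else 0)"
proof -
  define i where "i = c div 2"
  define j where "j = d div 2"
  have i: "i < length xs" and j: "j < length xs" using c d unfolding i_def j_def by auto
  define x where "x = xs ! i"
  define y where "y = xs ! j"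
  have x: "x \<in> carrier_vec (2*k)" unfolding x_def by (rule orth_carrier[OF o i])
  have y: "y \<in> carrier_vec (2*k)" unfolding y_def by (rule orth_carrier[OF o j])
  have xy: "x \<bullet> y = (if i = j then 1 else 0)" and xSy: "x \<bullet> (Sigma_mat k *\<^sub>v y) = 0"
    and ySx: "y \<bullet> (Sigma_mat k *\<^sub>v x) = 0"
    using o i j unfolding orth_def x_def y_def by auto
  have Sx: "Sigma_mat k *\<^sub>v x \<in> carrier_vec (2*k)" and Sy: "Sigma_mat k *\<^sub>v y \<in> carrier_vec (2*k)" by simp_all
  show ?thesis
  proof (cases "even c"; cases "even d")
    assume ec: "even c" and ed: "even d"
    have "colv k xs c \<bullet> colv k xs d = x \<bullet> y" unfolding colv_def x_def y_def i_def j_def using ec ed by simp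
    thus ?thesis unfolding xy even_eq[OF ec ed] i_def j_def by simp
  next
    assume ec: "even c" and ed: "odd d"
    have "colv k xs c \<bullet> colv k xs d = x \<bullet> (- (Sigma_mat k *\<^sub>v y))" unfolding colv_def x_def y_def i_def j_def using ec ed by simp
    also have "\<dots> = - (x \<bullet> (Sigma_mat k *\<^sub>v y))" by (rule scalar_prod_uminus_right) (use x in simp)
    finally show ?thesis using xSy ec ed by auto
  next
    assume ec: "odd c" and ed: "even d"
    have "colv k xs c \<bullet> colv k xs d = (- (Sigma_mat k *\<^sub>v x)) \<bullet> y" unfolding colv_def x_def y_def i_def j_def using ec ed by simp
    also have "\<dots> = - ((Sigma_mat k *\<^sub>v x) \<bullet> y)" by (rule scalar_prod_uminus_left) (use y in simp)
    also have "(Sigma_mat k *\<^sub>v x) \<bullet> y = y \<bullet> (Sigma_mat k *\<^sub>v x)" by (rule comm_scalar_prod[OF Sx y])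
    finally show ?thesis using ySx ec ed by auto
  next
    assume ec: "odd c" and ed: "odd d"
    have "colv k xs c \<bullet> colv k xs d = (- (Sigma_mat k *\<^sub>v x)) \<bullet> (- (Sigma_mat k *\<^sub>v y))" unfolding colv_def x_def y_def i_def j_def using ec ed by simp
    also have "\<dots> = - ((Sigma_mat k *\<^sub>v x) \<bullet> (- (Sigma_mat k *\<^sub>v y)))" by (rule scalar_prod_uminus_left) simp
    also have "(Sigma_mat k *\<^sub>v x) \<bullet> (- (Sigma_mat k *\<^sub>v y)) = - ((Sigma_mat k *\<^sub>v x) \<bullet> (Sigma_mat k *\<^sub>v y))"
      by (rule scalar_prod_uminus_right) simp
    also have "(Sigma_mat k *\<^sub>v x) \<bullet> (Sigma_mat k *\<^sub>v y) = x \<bullet> y" by (rule VS2[OF x y])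
    finally show ?thesis unfolding xy odd_eq[OF ec ed] i_def j_def by simp
  qed
qed


lemma colv_S: assumes o: "orth k xs" and c: "c < 2 * length xs" and d: "d < 2 * length xs"
  shows "colv k xs c \<bullet> (Sigma_mat k *\<^sub>v colv k xs d) = Sigma_mat (length xs) $$ (c,d)"
proof -
  define i where "i = c div 2"
  define j where "j = d div 2"
  have i: "i < length xs" and j: "j < length xs" using c d unfolding i_def j_def by auto
  define x where "x = xs ! i"
  define y where "y = xs ! j"
  have x: "x \<in> carrier_vec (2*k)" unfolding x_def by (rule orth_carrier[OF o i])
  have y: "y \<in> carrier_vec (2*k)" unfolding y_def by (rule orth_carrier[OF o j])
  have xy: "x \<bullet> y = (if i = j then 1 else 0)" and xSy: "x \<bullet> (Sigma_mat k *\<^sub>v y) = 0"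
    using o i j unfolding orth_def x_def y_def by auto
  have Sx: "Sigma_mat k *\<^sub>v x \<in> carrier_vec (2*k)" and Sy: "Sigma_mat k *\<^sub>v y \<in> carrier_vec (2*k)" by simp_all
  have SmSy: "Sigma_mat k *\<^sub>v (- (Sigma_mat k *\<^sub>v y)) = y"
  proof -
    have "Sigma_mat k *\<^sub>v (- (Sigma_mat k *\<^sub>v y)) = - (Sigma_mat k *\<^sub>v (Sigma_mat k *\<^sub>v y))"
      by (rule mat_vec_uminus) simp
    also have "Sigma_mat k *\<^sub>v (Sigma_mat k *\<^sub>v y) = - y" by (rule Sigma_sq_vec[OF y])
    finally show ?thesis using y by simp
  qed
  have E: "Sigma_mat (length xs) $$ (c,d) = (if d = sp c then ss c else 0)" by (rule Sigma_entry[OF c d])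
  show ?thesis
  proof (cases "even c"; cases "even d")
    assume ec: "even c" and ed: "even d"
    have "colv k xs c \<bullet> (Sigma_mat k *\<^sub>v colv k xs d) = x \<bullet> (Sigma_mat k *\<^sub>v y)" unfolding colv_def x_def y_def i_def j_def using ec ed by simp
    moreover have "d \<noteq> sp c" using ec ed sp_par[of c] by metis
    ultimately show ?thesis unfolding E xSy by simp
  next
    assume ec: "even c" and ed: "odd d"
    have "colv k xs c \<bullet> (Sigma_mat k *\<^sub>v colv k xs d) = x \<bullet> (Sigma_mat k *\<^sub>v (- (Sigma_mat k *\<^sub>v y)))" unfolding colv_def x_def y_def i_def j_def using ec ed by simp
    also have "\<dots> = x \<bullet> y" unfolding SmSy ..
    moreover have "(d = sp c) = (i = j)" unfolding i_def j_def sp_def using ec ed by (auto elim!: evenE oddE)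
    moreover have "ss c = 1" using ec by (simp add: ss_def)
    ultimately show ?thesis unfolding E xy by simp
  next
    assume ec: "odd c" and ed: "even d"
    have "colv k xs c \<bullet> (Sigma_mat k *\<^sub>v colv k xs d) = (- (Sigma_mat k *\<^sub>v x)) \<bullet> (Sigma_mat k *\<^sub>v y)" unfolding colv_def x_def y_def i_def j_def using ec ed by simp
    also have "\<dots> = - ((Sigma_mat k *\<^sub>v x) \<bullet> (Sigma_mat k *\<^sub>v y))" by (rule scalar_prod_uminus_left) simp
    also have "(Sigma_mat k *\<^sub>v x) \<bullet> (Sigma_mat k *\<^sub>v y) = x \<bullet> y" by (rule VS2[OF x y])
    moreover have "(d = sp c) = (i = j)" unfolding i_def j_def sp_def using ec ed by (auto elim!: evenE oddE)
    moreover have "ss c = -1" using ec by (simp add: ss_def)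
    ultimately show ?thesis unfolding E xy by simp
  next
    assume ec: "odd c" and ed: "odd d"
    have "colv k xs c \<bullet> (Sigma_mat k *\<^sub>v colv k xs d) = (- (Sigma_mat k *\<^sub>v x)) \<bullet> (Sigma_mat k *\<^sub>v (- (Sigma_mat k *\<^sub>v y)))" unfolding colv_def x_def y_def i_def j_def using ec ed by simp
    also have "\<dots> = (- (Sigma_mat k *\<^sub>v x)) \<bullet> y" unfolding SmSy ..
    also have "\<dots> = - ((Sigma_mat k *\<^sub>v x) \<bullet> y)" by (rule scalar_prod_uminus_left) (use y in simp)
    also have "(Sigma_mat k *\<^sub>v x) \<bullet> y = - (x \<bullet> (Sigma_mat k *\<^sub>v y))" by (rule VS1[OF x y])
    moreover have "d \<noteq> sp c" using ec ed sp_par[of c] by metis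
    ultimately show ?thesis unfolding E xSy by simp
  qed
qed

lemma TtT: assumes o: "orth k xs"
  shows "transpose_mat (Tm k xs) * Tm k xs = 1\<^sub>m (2 * length xs)"
proof (rule eq_matI)
  fix c d assume "c < dim_row (1\<^sub>m (2 * length xs) :: real mat)" "d < dim_col (1\<^sub>m (2 * length xs) :: real mat)"
  hence c: "c < 2 * length xs" and d: "d < 2 * length xs" by auto
  have "(transpose_mat (Tm k xs) * Tm k xs) $$ (c,d) = col (Tm k xs) c \<bullet> col (Tm k xs) d"
    using c d Tm_carrier[of k xs] by simp
  also have "\<dots> = colv k xs c \<bullet> colv k xs d" unfolding Tm_col[OF o c] Tm_col[OF o d] ..
  also have "\<dots> = 1\<^sub>m (2 * length xs) $$ (c,d)" unfolding colv_dot[OF o c d] using c d by simp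
  finally show "(transpose_mat (Tm k xs) * Tm k xs) $$ (c,d) = 1\<^sub>m (2 * length xs) $$ (c,d)" .
qed (use Tm_carrier[of k xs] in auto)

lemma TSigT: assumes o: "orth k xs"
  shows "transpose_mat (Tm k xs) * Sigma_mat k * Tm k xs = Sigma_mat (length xs)"
proof -
  have T: "Tm k xs \<in> carrier_mat (2*k) (2 * length xs)" by (rule Tm_carrier)
  have TT: "transpose_mat (Tm k xs) \<in> carrier_mat (2 * length xs) (2*k)" using T by simp
  have e: "transpose_mat (Tm k xs) * Sigma_mat k * Tm k xs = transpose_mat (Tm k xs) * (Sigma_mat k * Tm k xs)"
    by (rule assoc_mult_mat[OF TT Sigma_carrier T])
  have ST: "Sigma_mat k * Tm k xs \<in> carrier_mat (2*k) (2 * length xs)" by (rule mult_carrier_mat[OF Sigma_carrier T])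
  show ?thesis unfolding e
  proof (rule eq_matI)
    fix c d assume "c < dim_row (Sigma_mat (length xs))" "d < dim_col (Sigma_mat (length xs))"
    hence c: "c < 2 * length xs" and d: "d < 2 * length xs" by auto
    have "(transpose_mat (Tm k xs) * (Sigma_mat k * Tm k xs)) $$ (c,d) = row (transpose_mat (Tm k xs)) c \<bullet> col (Sigma_mat k * Tm k xs) d"
      by (rule index_mult_mat(1)) (use c d TT ST in auto)
    also have "row (transpose_mat (Tm k xs)) c = col (Tm k xs) c" using c T by simp
    also have "col (Sigma_mat k * Tm k xs) d = Sigma_mat k *\<^sub>v col (Tm k xs) d" by (rule col_mult2[OF Sigma_carrier T d])
    also have "col (Tm k xs) c \<bullet> (Sigma_mat k *\<^sub>v col (Tm k xs) d) = Sigma_mat (length xs) $$ (c,d)"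
      unfolding Tm_col[OF o c] Tm_col[OF o d] by (rule colv_S[OF o c d])
    finally show "(transpose_mat (Tm k xs) * (Sigma_mat k * Tm k xs)) $$ (c,d) = Sigma_mat (length xs) $$ (c,d)" .
  qed (use TT ST in auto)
qed

lemma orth_len: "orth k xs \<Longrightarrow> length xs \<le> k"
  using orth_bound[OF Tm_carrier TtT] by simp




lemma orth_Nil: "orth k []" unfolding orth_def by simp

lemma self_dot_pos: assumes u: "(u :: real vec) \<in> carrier_vec N" and nz: "u \<noteq> 0\<^sub>v N"
  shows "u \<bullet> u > 0"
proof -
  obtain i where i: "i < N" and ui: "u $ i \<noteq> 0"
    using nz u by (metis eq_vecI carrier_vecD index_zero_vec(1) index_zero_vec(2))
  have "u \<bullet> u = (\<Sum>j\<in>{0..<N}. u $ j * u $ j)" using u by (simp add: scalar_prod_def)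
  also have "\<dots> > 0"
    by (rule sum_pos2[of "{0..<N}" i]) (use i ui in \<open>auto simp: zero_less_mult_iff linorder_neq_iff\<close>)
  finally show ?thesis .
qed

locale kset =
  fixes k r1 r2 :: nat and M1 M2 :: "real mat"
  assumes M1: "M1 \<in> carrier_mat r1 (2*k)" and M2: "M2 \<in> carrier_mat r2 (2*k)"
    and Sinv: "\<And>v. v \<in> mat_kernel M1 \<inter> mat_kernel M2 \<Longrightarrow> Sigma_mat k *\<^sub>v v \<in> mat_kernel M1 \<inter> mat_kernel M2"
begin

abbreviation "KS \<equiv> mat_kernel M1 \<inter> mat_kernel M2"

lemma KS_iff: "v \<in> KS \<longleftrightarrow> v \<in> carrier_vec (2*k) \<and> M1 *\<^sub>v v = 0\<^sub>v r1 \<and> M2 *\<^sub>v v = 0\<^sub>v r2"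
  unfolding mat_kernel_def using M1 M2 by auto

lemma KS_carrier: "v \<in> KS \<Longrightarrow> v \<in> carrier_vec (2*k)" using KS_iff by blast

lemma ker_diff: assumes M: "(M :: real mat) \<in> carrier_mat r (2*k)" and a: "a \<in> carrier_vec (2*k)" and b: "b \<in> carrier_vec (2*k)"
  and Ma: "M *\<^sub>v a = 0\<^sub>v r" and Mb: "M *\<^sub>v b = 0\<^sub>v r"
  shows "M *\<^sub>v (a - b) = 0\<^sub>v r"
  unfolding mult_minus_distrib_mat_vec[OF M a b] Ma Mb by (intro eq_vecI) auto

lemma ker_smult: assumes M: "(M :: real mat) \<in> carrier_mat r (2*k)" and a: "a \<in> carrier_vec (2*k)"
  and Ma: "M *\<^sub>v a = 0\<^sub>v r"
  shows "M *\<^sub>v (c \<cdot>\<^sub>v a) = 0\<^sub>v r"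
  unfolding mult_mat_vec[OF M a] Ma by (intro eq_vecI) auto

lemma ker_uminus: assumes M: "(M :: real mat) \<in> carrier_mat r (2*k)" and a: "a \<in> carrier_vec (2*k)"
  and Ma: "M *\<^sub>v a = 0\<^sub>v r"
  shows "M *\<^sub>v (- a) = 0\<^sub>v r"
proof -
  have "M *\<^sub>v (- a) = - (M *\<^sub>v a)" by (rule mat_vec_uminus) (use M a in simp)
  thus ?thesis unfolding Ma by (auto intro!: eq_vecI)
qed

lemma KS_diff: "a \<in> KS \<Longrightarrow> b \<in> KS \<Longrightarrow> a - b \<in> KS"
  unfolding KS_iff using ker_diff[OF M1, of a b] ker_diff[OF M2, of a b] by auto
lemma KS_smult: "a \<in> KS \<Longrightarrow> c \<cdot>\<^sub>v a \<in> KS"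
  unfolding KS_iff using ker_smult[OF M1, of a c] ker_smult[OF M2, of a c] by auto
lemma KS_uminus: "a \<in> KS \<Longrightarrow> - a \<in> KS"
  unfolding KS_iff using ker_uminus[OF M1, of a] ker_uminus[OF M2, of a] by auto

lemma colv_KS: assumes o: "orth k xs" and s: "set xs \<subseteq> KS" and c: "c < 2 * length xs"
  shows "colv k xs c \<in> KS"
proof -
  have "xs ! (c div 2) \<in> KS" using s c by auto
  thus ?thesis unfolding colv_def using Sinv KS_uminus by auto
qed

lemma range_KS: assumes o: "orth k xs" and s: "set xs \<subseteq> KS" and w: "w \<in> carrier_vec (2 * length xs)"
  shows "Tm k xs *\<^sub>v w \<in> KS"
proof -
  have T: "Tm k xs \<in> carrier_mat (2*k) (2 * length xs)" by (rule Tm_carrier)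
  have z: "M *\<^sub>v (Tm k xs *\<^sub>v w) = 0\<^sub>v r" if M: "M \<in> carrier_mat r (2*k)" and
    Mc: "\<And>c. c < 2 * length xs \<Longrightarrow> M *\<^sub>v colv k xs c = 0\<^sub>v r" for M r
  proof -
    have "M *\<^sub>v (Tm k xs *\<^sub>v w) = (M * Tm k xs) *\<^sub>v w" by (rule assoc_mult_mat_vec[OF M T w, symmetric])
    also have "M * Tm k xs = 0\<^sub>m r (2 * length xs)"
    proof (rule eq_matI)
      fix i c assume "i < dim_row (0\<^sub>m r (2 * length xs) :: real mat)" "c < dim_col (0\<^sub>m r (2 * length xs) :: real mat)"
      hence i: "i < r" and c: "c < 2 * length xs" by auto
      have "(M * Tm k xs) $$ (i,c) = row M i \<bullet> col (Tm k xs) c" using i c M T by simp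
      also have "\<dots> = (M *\<^sub>v col (Tm k xs) c) $ i" using i M by simp
      also have "\<dots> = 0" unfolding Tm_col[OF o c] Mc[OF c] using i by simp
      finally show "(M * Tm k xs) $$ (i,c) = 0\<^sub>m r (2 * length xs) $$ (i,c)" using i c by simp
    qed (use M T in auto)
    also have "0\<^sub>m r (2 * length xs) *\<^sub>v w = 0\<^sub>v r" by (intro eq_vecI) (use w in auto)
    finally show ?thesis .
  qed
  have Tw: "Tm k xs *\<^sub>v w \<in> carrier_vec (2*k)" by (rule mult_mat_vec_carrier[OF T w])
  show ?thesis unfolding KS_iff
    using Tw z[OF M1] z[OF M2] colv_KS[OF o s] unfolding KS_iff by blast
qed

end

lemma proj_orth: assumes o: "orth k xs" and w: "w \<in> carrier_vec (2*k)"
  and c: "c < 2 * length xs"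
  shows "colv k xs c \<bullet> (w - Tm k xs *\<^sub>v (transpose_mat (Tm k xs) *\<^sub>v w)) = 0"
proof -
  define T where "T = Tm k xs"
  have T: "T \<in> carrier_mat (2*k) (2 * length xs)" unfolding T_def by (rule Tm_carrier)
  have TT: "transpose_mat T \<in> carrier_mat (2 * length xs) (2*k)" using T by simp
  have y: "transpose_mat T *\<^sub>v w \<in> carrier_vec (2 * length xs)" by (rule mult_mat_vec_carrier[OF TT w])
  have Ty: "T *\<^sub>v (transpose_mat T *\<^sub>v w) \<in> carrier_vec (2*k)" by (rule mult_mat_vec_carrier[OF T y])
  have "transpose_mat T *\<^sub>v (w - T *\<^sub>v (transpose_mat T *\<^sub>v w)) = transpose_mat T *\<^sub>v w - transpose_mat T *\<^sub>v (T *\<^sub>v (transpose_mat T *\<^sub>v w))"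
    by (rule mult_minus_distrib_mat_vec[OF TT w Ty])
  also have "transpose_mat T *\<^sub>v (T *\<^sub>v (transpose_mat T *\<^sub>v w)) = (transpose_mat T * T) *\<^sub>v (transpose_mat T *\<^sub>v w)"
    by (rule assoc_mult_mat_vec[OF TT T y, symmetric])
  also have "transpose_mat T * T = 1\<^sub>m (2 * length xs)" unfolding T_def by (rule TtT[OF o])
  also have "1\<^sub>m (2 * length xs) *\<^sub>v (transpose_mat T *\<^sub>v w) = transpose_mat T *\<^sub>v w" using y by simp
  also have "transpose_mat T *\<^sub>v w - transpose_mat T *\<^sub>v w = 0\<^sub>v (2 * length xs)" using y by (intro eq_vecI) auto
  finally have z: "transpose_mat T *\<^sub>v (w - T *\<^sub>v (transpose_mat T *\<^sub>v w)) = 0\<^sub>v (2 * length xs)" .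
  have "(transpose_mat T *\<^sub>v (w - T *\<^sub>v (transpose_mat T *\<^sub>v w))) $ c = row (transpose_mat T) c \<bullet> (w - T *\<^sub>v (transpose_mat T *\<^sub>v w))"
    using c TT by simp
  also have "row (transpose_mat T) c = colv k xs c" using c T unfolding T_def by (simp add: Tm_col[OF o c])
  finally show ?thesis using z c unfolding T_def by simp
qed




lemma orth_ext: assumes o: "orth k xs" and u: "u \<in> carrier_vec (2*k)" and nz: "u \<noteq> 0\<^sub>v (2*k)"
  and perp: "\<And>c. c < 2 * length xs \<Longrightarrow> colv k xs c \<bullet> u = 0"
  shows "orth k (xs @ [(1 / sqrt (u \<bullet> u)) \<cdot>\<^sub>v u])"
proof -
  define a where "a = 1 / sqrt (u \<bullet> u)"
  define x where "x = a \<cdot>\<^sub>v u"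
  have uu: "u \<bullet> u > 0" by (rule self_dot_pos[OF u nz])
  have x: "x \<in> carrier_vec (2*k)" unfolding x_def using u by simp
  have xx: "x \<bullet> x = 1"
  proof -
    have "x \<bullet> x = a * (a * (u \<bullet> u))" unfolding x_def using u by simp
    also have "\<dots> = (u \<bullet> u) / (sqrt (u \<bullet> u))^2" unfolding a_def by (simp add: power2_eq_square)
    also have "\<dots> = 1" using uu by simp
    finally show ?thesis .
  qed
  have xSx: "x \<bullet> (Sigma_mat k *\<^sub>v x) = 0" by (rule VS3[OF x])
  have old: "x \<bullet> y = 0 \<and> y \<bullet> x = 0 \<and> x \<bullet> (Sigma_mat k *\<^sub>v y) = 0 \<and> y \<bullet> (Sigma_mat k *\<^sub>v x) = 0"
    if i: "i < length xs" and yd: "y = xs ! i" for i y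
  proof -
    have y: "y \<in> carrier_vec (2*k)" unfolding yd by (rule orth_carrier[OF o i])
    have Sy: "Sigma_mat k *\<^sub>v y \<in> carrier_vec (2*k)" by simp
    have yu: "y \<bullet> u = 0" using perp[of "2*i"] i unfolding colv_def yd by simp
    have "colv k xs (2*i+1) \<bullet> u = 0" using perp[of "2*i+1"] i by simp
    hence "(- (Sigma_mat k *\<^sub>v y)) \<bullet> u = 0" unfolding colv_def yd by simp
    moreover have "(- (Sigma_mat k *\<^sub>v y)) \<bullet> u = - ((Sigma_mat k *\<^sub>v y) \<bullet> u)"
      by (rule scalar_prod_uminus_left) (use u in simp)
    ultimately have Syu: "(Sigma_mat k *\<^sub>v y) \<bullet> u = 0" by simp
    have uy: "u \<bullet> y = 0" using yu comm_scalar_prod[OF y u] by simp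
    have uSy: "u \<bullet> (Sigma_mat k *\<^sub>v y) = 0" using Syu comm_scalar_prod[OF Sy u] by simp
    have 1: "x \<bullet> y = 0" unfolding x_def using u y uy by simp
    have 2: "y \<bullet> x = 0" unfolding x_def using u y yu by simp
    have 3: "x \<bullet> (Sigma_mat k *\<^sub>v y) = 0" unfolding x_def using u Sy uSy by simp
    have Syx: "(Sigma_mat k *\<^sub>v y) \<bullet> x = 0" unfolding x_def using u Sy Syu by simp
    have 4: "y \<bullet> (Sigma_mat k *\<^sub>v x) = 0" using VS1[OF y x] Syx by simp
    show ?thesis using 1 2 3 4 by blast
  qed
  let ?ys = "xs @ [x]"
  have nth: "?ys ! i = (if i < length xs then xs ! i else x)" if "i < length ?ys" for i
    using that by (auto simp: nth_append)
  have "orth k ?ys"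
    unfolding orth_def
  proof (intro conjI allI impI)
    fix i assume i: "i < length ?ys"
    show "?ys ! i \<in> carrier_vec (2*k)" unfolding nth[OF i] using orth_carrier[OF o] x by auto
  next
    fix i j assume i: "i < length ?ys" and j: "j < length ?ys"
    have oij: "xs!i \<bullet> xs!j = (if i = j then 1 else 0) \<and> xs!i \<bullet> (Sigma_mat k *\<^sub>v xs!j) = 0"
      if "i < length xs" "j < length xs" using o that unfolding orth_def by blast
    have ilen: "\<not> i < length xs \<Longrightarrow> i = length xs" and jlen: "\<not> j < length xs \<Longrightarrow> j = length xs" using i j by auto
    show "?ys ! i \<bullet> ?ys ! j = (if i = j then 1 else 0)"
    proof (cases "i < length xs")
      case ti: True
      show ?thesis
      proof (cases "j < length xs")
        case tj: True
        show ?thesis unfolding nth[OF i] nth[OF j] using ti tj oij[OF ti tj] by simp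
      next
        case fj: False
        have jl: "j = length xs" using jlen[OF fj] .
        have "xs!i \<bullet> x = 0" using old[OF ti refl] by blast
        thus ?thesis unfolding nth[OF i] nth[OF j] using ti fj jl by simp
      qed
    next
      case fi: False
      have il: "i = length xs" using ilen[OF fi] .
      show ?thesis
      proof (cases "j < length xs")
        case tj: True
        have "x \<bullet> xs!j = 0" using old[OF tj refl] by blast
        thus ?thesis unfolding nth[OF i] nth[OF j] using fi tj il by simp
      next
        case fj: False
        have jl: "j = length xs" using jlen[OF fj] .
        show ?thesis unfolding nth[OF i] nth[OF j] using fi fj il jl xx by simp
      qed
    qed
    show "?ys ! i \<bullet> (Sigma_mat k *\<^sub>v ?ys ! j) = 0"
    proof (cases "i < length xs")
      case ti: True
      show ?thesis
      proof (cases "j < length xs")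
        case tj: True
        show ?thesis unfolding nth[OF i] nth[OF j] using ti tj oij[OF ti tj] by simp
      next
        case fj: False
        have "xs!i \<bullet> (Sigma_mat k *\<^sub>v x) = 0" using old[OF ti refl] by blast
        thus ?thesis unfolding nth[OF i] nth[OF j] using ti fj by simp
      qed
    next
      case fi: False
      show ?thesis
      proof (cases "j < length xs")
        case tj: True
        have "x \<bullet> (Sigma_mat k *\<^sub>v xs!j) = 0" using old[OF tj refl] by blast
        thus ?thesis unfolding nth[OF i] nth[OF j] using fi tj by simp
      next
        case fj: False
        show ?thesis unfolding nth[OF i] nth[OF j] using fi fj xSx by simp
      qed
    qed
  qed
  thus ?thesis unfolding x_def a_def .
qed

context kset
begin

lemma basis_step: "orth k xs \<Longrightarrow> set xs \<subseteq> KS \<Longrightarrow> k - length xs = d \<Longrightarrow>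
  \<exists>ys. orth k ys \<and> set ys \<subseteq> KS \<and> mat_range (Tm k ys) = KS"
proof (induction d arbitrary: xs rule: less_induct)
  case (less d)
  note o = less.prems(1) and s = less.prems(2)
  define T where "T = Tm k xs"
  have T: "T \<in> carrier_mat (2*k) (2 * length xs)" unfolding T_def by (rule Tm_carrier)
  have sub: "mat_range T \<subseteq> KS"
    unfolding mat_range_def T_def using range_KS[OF o s] Tm_carrier[of k xs] by auto
  show ?case
  proof (cases "KS \<subseteq> mat_range T")
    case True
    thus ?thesis using o s sub unfolding T_def by blast
  next
    case False
    then obtain w where wK: "w \<in> KS" and wn: "w \<notin> mat_range T" by blast
    have w: "w \<in> carrier_vec (2*k)" by (rule KS_carrier[OF wK])
    have TT: "transpose_mat T \<in> carrier_mat (2 * length xs) (2*k)" using T by simp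
    define y where "y = transpose_mat T *\<^sub>v w"
    have y: "y \<in> carrier_vec (2 * length xs)" unfolding y_def by (rule mult_mat_vec_carrier[OF TT w])
    define u where "u = w - T *\<^sub>v y"
    have Ty: "T *\<^sub>v y \<in> carrier_vec (2*k)" by (rule mult_mat_vec_carrier[OF T y])
    have u: "u \<in> carrier_vec (2*k)" unfolding u_def using w Ty by simp
    have TyK: "T *\<^sub>v y \<in> KS" unfolding T_def by (rule range_KS[OF o s y[unfolded T_def]])
    have uK: "u \<in> KS" unfolding u_def by (rule KS_diff[OF wK TyK])
    have nz: "u \<noteq> 0\<^sub>v (2*k)"
    proof
      assume "u = 0\<^sub>v (2*k)"
      note u0 = this
      have "w = T *\<^sub>v y"
      proof (rule eq_vecI)
        fix i assume "i < dim_vec (T *\<^sub>v y)"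
        hence i: "i < 2*k" using T by simp
        have "u $ i = 0" using u0 i by simp
        hence "w $ i - (T *\<^sub>v y) $ i = 0" unfolding u_def using i carrier_vecD[OF Ty] carrier_vecD[OF w] by simp
        thus "w $ i = (T *\<^sub>v y) $ i" by simp
      qed (use w T in simp)
      hence "w \<in> mat_range T" unfolding mat_range_def using y T by auto
      thus False using wn by blast
    qed
    have perp: "colv k xs c \<bullet> u = 0" if c: "c < 2 * length xs" for c
      unfolding u_def y_def T_def by (rule proj_orth[OF o w c])
    define x where "x = (1 / sqrt (u \<bullet> u)) \<cdot>\<^sub>v u"
    have o2: "orth k (xs @ [x])" unfolding x_def by (rule orth_ext[OF o u nz perp])
    have s2: "set (xs @ [x]) \<subseteq> KS" using s KS_smult[OF uK] unfolding x_def by auto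
    have "length (xs @ [x]) \<le> k" by (rule orth_len[OF o2])
    hence lt: "k - length (xs @ [x]) < d" using less.prems(3) by simp
    show ?thesis by (rule less.IH[OF lt o2 s2 refl])
  qed
qed

lemma basis_exists: "\<exists>ys. orth k ys \<and> set ys \<subseteq> KS \<and> mat_range (Tm k ys) = KS"
  by (rule basis_step[OF orth_Nil _ refl]) simp

end



lemma range_Nil: "mat_range (Tm k []) = {0\<^sub>v (2*k)}"
proof -
  have dc: "dim_col (Tm k []) = 0" using Tm_carrier[of k "[]"] by simp
  have e: "Tm k [] *\<^sub>v w = 0\<^sub>v (2*k)" if w: "w \<in> carrier_vec 0" for w
    using w by (intro eq_vecI) (auto simp: Tm_def scalar_prod_def)
  show ?thesis
  proof (intro equalityI subsetI)
    fix v assume "v \<in> mat_range (Tm k [])"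
    then obtain w where "v = Tm k [] *\<^sub>v w" and "w \<in> carrier_vec 0" unfolding mat_range_def dc by blast
    thus "v \<in> {0\<^sub>v (2*k)}" using e by simp
  next
    fix v :: "real vec" assume "v \<in> {0\<^sub>v (2*k)}"
    hence "v = Tm k [] *\<^sub>v 0\<^sub>v 0" using e[of "0\<^sub>v 0"] by simp
    moreover have "(0\<^sub>v 0 :: real vec) \<in> carrier_vec (dim_col (Tm k []))" unfolding dc by simp
    ultimately show "v \<in> mat_range (Tm k [])" unfolding mat_range_def by blast
  qed
qed

theorem theorem1:
  fixes n m :: nat and G C :: "real mat"
  assumes "n \<ge> 1" and "m \<ge> 1"
    and "G \<in> carrier_mat (2*n) (2*n)" and "transpose_mat G = G"
    and "C \<in> carrier_mat (2*m) (2*n)"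
  shows "(has_DF_subsystem n m G C \<longleftrightarrow>
           mat_kernel (obsv_mat n m G C) \<inter> mat_kernel (obsv_mat n m G C * Sigma_mat n)
             \<noteq> {0\<^sub>v (2*n)})
       \<and> (has_DF_subsystem n m G C \<longrightarrow>
           (\<exists>l T1. l \<ge> 1 \<and> T1 \<in> carrier_mat (2*n) (2*l) \<and>
              mat_range T1 = mat_kernel (obsv_mat n m G C) \<inter> mat_kernel (obsv_mat n m G C * Sigma_mat n) \<and>
              transpose_mat T1 * Sigma_mat n * T1 = Sigma_mat l \<and>
              is_DF_mode n m G C l T1))"
proof -
  interpret q: qs n m G C using assms by unfold_locales auto
  have OS: "obsv_mat n m G C * Sigma_mat n \<in> carrier_mat (2*n*(2*m)) (2*n)"
    by (rule mult_carrier_mat[OF q.Ob_carrier Sigma_carrier])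
  interpret ks: kset n "2*n*(2*m)" "2*n*(2*m)" "obsv_mat n m G C" "obsv_mat n m G C * Sigma_mat n"
  proof (unfold_locales)
    show "obsv_mat n m G C \<in> carrier_mat (2*n*(2*m)) (2*n)" by (rule q.Ob_carrier)
    show "obsv_mat n m G C * Sigma_mat n \<in> carrier_mat (2*n*(2*m)) (2*n)" by (rule OS)
    fix v assume "v \<in> mat_kernel (obsv_mat n m G C) \<inter> mat_kernel (obsv_mat n m G C * Sigma_mat n)"
    thus "Sigma_mat n *\<^sub>v v \<in> mat_kernel (obsv_mat n m G C) \<inter> mat_kernel (obsv_mat n m G C * Sigma_mat n)"
      using q.KK_S unfolding q.KK_def by blast
  qed
  define K where "K = mat_kernel (obsv_mat n m G C) \<inter> mat_kernel (obsv_mat n m G C * Sigma_mat n)"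
  have KE: "mat_kernel (transpose_mat (ctrb_mat n m G C)) \<inter> mat_kernel (obsv_mat n m G C) = K"
    using q.KK_eq unfolding q.KK_def K_def .
  have A: "K \<noteq> {0\<^sub>v (2*n)}" if h: "has_DF_subsystem n m G C"
  proof -
    obtain l T where D: "is_DF_mode n m G C l T" using h unfolding has_DF_subsystem_def by blast
    have l: "0 < 2*l" using D unfolding is_DF_mode_def by simp
    have "col T 0 \<noteq> 0\<^sub>v (2*n) \<and> col T 0 \<in> K" using D l KE unfolding is_DF_mode_def by blast
    thus ?thesis by blast
  qed
  have B: "\<exists>l T1. l \<ge> 1 \<and> T1 \<in> carrier_mat (2*n) (2*l) \<and> mat_range T1 = K \<and>
              transpose_mat T1 * Sigma_mat n * T1 = Sigma_mat l \<and> is_DF_mode n m G C l T1"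
    if h: "K \<noteq> {0\<^sub>v (2*n)}"
  proof -
    obtain ys where o: "orth n ys" and s: "set ys \<subseteq> K" and r: "mat_range (Tm n ys) = K"
      using ks.basis_exists unfolding K_def by blast
    define l where "l = length ys"
    have l: "l \<ge> 1"
    proof (rule ccontr)
      assume "\<not> l \<ge> 1" hence "ys = []" unfolding l_def by (cases ys) auto
      hence "K = {0\<^sub>v (2*n)}" using r range_Nil by simp
      thus False using h by blast
    qed
    have T: "Tm n ys \<in> carrier_mat (2*n) (2*l)" unfolding l_def by (rule Tm_carrier)
    have TS: "transpose_mat (Tm n ys) * Sigma_mat n * Tm n ys = Sigma_mat l" unfolding l_def by (rule TSigT[OF o])
    have cols: "col (Tm n ys) j \<noteq> 0\<^sub>v (2*n) \<and> col (Tm n ys) j \<in> mat_kernel (transpose_mat (ctrb_mat n m G C)) \<inter> mat_kernel (obsv_mat n m G C)"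
      if j: "j < 2*l" for j
    proof -
      have j': "j < 2 * length ys" using j unfolding l_def .
      have cv: "colv n ys j \<in> carrier_vec (2*n)" by (rule colv_carrier[OF o j'])
      have "colv n ys j \<bullet> colv n ys j = 1" using colv_dot[OF o j' j'] by simp
      hence nz: "colv n ys j \<noteq> 0\<^sub>v (2*n)" using cv by auto
      have inK: "colv n ys j \<in> K" using ks.colv_KS[OF o _ j'] s unfolding K_def by blast
      show ?thesis unfolding Tm_col[OF o j'] KE using nz inK by blast
    qed
    have D: "is_DF_mode n m G C l (Tm n ys)" unfolding is_DF_mode_def using l T cols TS by blast
    show ?thesis using l T r TS D by blast
  qed
  have iff: "has_DF_subsystem n m G C \<longleftrightarrow> K \<noteq> {0\<^sub>v (2*n)}"
  proof
    assume "has_DF_subsystem n m G C" thus "K \<noteq> {0\<^sub>v (2*n)}" by (rule A)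
  next
    assume "K \<noteq> {0\<^sub>v (2*n)}"
    then obtain l T1 where "is_DF_mode n m G C l T1" using B by blast
    thus "has_DF_subsystem n m G C" unfolding has_DF_subsystem_def by blast
  qed
  show ?thesis unfolding K_def[symmetric] using iff A B by blast
qed



end
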